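(* The map sending $\Gamma\in F(L)$ of $x$-degree $3$ to the unique polynomial $P\in\mathbb{R}[X,Y]$ with $P(X,Y)=-P(Y,X)$ and $\partial_x(\Gamma)=l_P$ is a linear bijection from the $x$-degree-$3$ part of $F(L)$ onto $$\mathcal{P}=\{P\in\mathbb{R}[X,Y]:\ P(X,Y)=-P(Y,X),\ 2P(X,Y)=P(-X-Y,X)-P(-X-Y,Y)\}.$$
   Context: $A=\mathbb{R}\langle x,y\rangle$; $L\subset A$ the free Lie algebra on $x,y$; $\operatorname{ad}_y(l)=[y,l]$. For $P=\sum c_{i,j}X^iY^j\in\mathbb{R}[X,Y]$ set $l_P=\sum_{i,j}c_{i,j}[\operatorname{ad}_y^i(x),\operatorname{ad}_y^j(x)]\in L$; this gives a linear bijection between polynomials with $P(X,Y)=-P(Y,X)$ and the elements of $L$ of $x$-degree $2$. $\operatorname{tr}$ is the projection $A\to A/\operatorname{span}\{ab-ba\}$; $F(L)$ is the quotient of $L\otimes L$ by the span of $a\otimes b-b\otimes a$ and $a\otimes[b,c]-[a,b]\otimes c$, regarded inside $A/\operatorname{span}\{ab-ba\}$ via $a\otimes b\mapsto\operatorname{tr}(ab)$; its $x$-degree is the number of letters $x$. $\partial_x$ maps cyclic words by $\operatorname{tr}(a_1\cdots a_n)\mapsto\sum_{i:\,a_i=x}a_{i+1}\cdots a_n a_1\cdots a_{i-1}$. *)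

theory Defs
  imports Complex_Main
begin

datatype letter = LX | LY

text \<open>Elements of A: coefficient functions on words (finitely supported).\<close>
type_synonym ncpoly = "letter list \<Rightarrow> real"

definition Afin :: "ncpoly set" where
  "Afin = {f. finite {w. f w \<noteq> 0}}"

definition addA :: "ncpoly \<Rightarrow> ncpoly \<Rightarrow> ncpoly" where
  "addA f g = (\<lambda>w. f w + g w)"

definition subA :: "ncpoly \<Rightarrow> ncpoly \<Rightarrow> ncpoly" where
  "subA f g = (\<lambda>w. f w - g w)"

definition smulA :: "real \<Rightarrow> ncpoly \<Rightarrow> ncpoly" where
  "smulA c f = (\<lambda>w. c * f w)"

definition zeroA :: ncpoly where
  "zeroA = (\<lambda>w. 0)"

definition mulA :: "ncpoly \<Rightarrow> ncpoly \<Rightarrow> ncpoly" where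
  "mulA f g = (\<lambda>w. \<Sum>i\<in>{0..length w}. f (take i w) * g (drop i w))"

definition genA :: "letter \<Rightarrow> ncpoly" where
  "genA c = (\<lambda>w. if w = [c] then 1 else 0)"

definition brA :: "ncpoly \<Rightarrow> ncpoly \<Rightarrow> ncpoly" where
  "brA f g = subA (mulA f g) (mulA g f)"

inductive_set lspan :: "ncpoly set \<Rightarrow> ncpoly set" for S where
  lspan_zero: "zeroA \<in> lspan S"
| lspan_base: "s \<in> S \<Longrightarrow> s \<in> lspan S"
| lspan_add: "f \<in> lspan S \<Longrightarrow> g \<in> lspan S \<Longrightarrow> addA f g \<in> lspan S"
| lspan_smul: "f \<in> lspan S \<Longrightarrow> smulA c f \<in> lspan S"

text \<open>The free Lie algebra L: Lie subalgebra of A generated by x and y.\<close>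
inductive_set freeLie :: "ncpoly set" where
  fl_x: "genA LX \<in> freeLie"
| fl_y: "genA LY \<in> freeLie"
| fl_zero: "zeroA \<in> freeLie"
| fl_add: "f \<in> freeLie \<Longrightarrow> g \<in> freeLie \<Longrightarrow> addA f g \<in> freeLie"
| fl_smul: "f \<in> freeLie \<Longrightarrow> smulA c f \<in> freeLie"
| fl_br: "f \<in> freeLie \<Longrightarrow> g \<in> freeLie \<Longrightarrow> brA f g \<in> freeLie"

text \<open>The commutator subspace span{ab - ba}; A/comm is the space of cyclic words,
  and tr is the projection f \<mapsto> class of f modulo comm.\<close>
definition comm :: "ncpoly set" where
  "comm = lspan {subA (mulA a b) (mulA b a) | a b. a \<in> Afin \<and> b \<in> Afin}"

text \<open>Representatives (in A) of elements of F(L) \<subseteq> A/comm: F(L) is the image of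
  L \<otimes> L under a \<otimes> b \<mapsto> tr(ab), i.e. the span of the classes tr(ab), a,b \<in> L.\<close>
definition FLrep :: "ncpoly set" where
  "FLrep = {f \<in> Afin. \<exists>g \<in> lspan {mulA a b | a b. a \<in> freeLie \<and> b \<in> freeLie}.
                       subA f g \<in> comm}"

definition xhomog :: "nat \<Rightarrow> ncpoly \<Rightarrow> bool" where
  "xhomog d f \<longleftrightarrow> (\<forall>w. f w \<noteq> 0 \<longrightarrow> count_list w LX = d)"

text \<open>Representatives of the x-degree-3 part of F(L) (the degree-3 part of the graded
  space A/comm is represented by x-homogeneous elements of degree 3).\<close>
definition F3rep :: "ncpoly set" where
  "F3rep = {f \<in> FLrep. xhomog 3 f}"

text \<open>The cyclic derivative on representatives: the word p x s contributes the word s p,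
  i.e. tr(a1...an) \<mapsto> sum over i with ai = x of a(i+1)...an a1...a(i-1).\<close>
definition Dx :: "ncpoly \<Rightarrow> ncpoly" where
  "Dx f = (\<lambda>u. \<Sum>k\<in>{0..length u}. f (drop k u @ LX # take k u))"

text \<open>A polynomial in R[X,Y] is a finitely supported coefficient function (i,j) \<mapsto> c_{i,j}.\<close>
type_synonym bipoly = "nat \<times> nat \<Rightarrow> real"

definition supp2 :: "bipoly \<Rightarrow> (nat \<times> nat) set" where
  "supp2 P = {p. P p \<noteq> 0}"

definition Poly2 :: "bipoly set" where
  "Poly2 = {P. finite (supp2 P)}"

definition AntiPoly :: "bipoly set" where
  "AntiPoly = {P \<in> Poly2. \<forall>i j. P (i, j) = - P (j, i)}"

definition peval :: "bipoly \<Rightarrow> real \<Rightarrow> real \<Rightarrow> real" where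
  "peval P a b = (\<Sum>(i, j)\<in>supp2 P. P (i, j) * a ^ i * b ^ j)"

text \<open>The space \<P>; the polynomial identity 2P(X,Y) = P(-X-Y,X) - P(-X-Y,Y) is stated as
  an identity of polynomial functions on R^2 (equivalent, R being infinite).\<close>
definition PP :: "bipoly set" where
  "PP = {P \<in> AntiPoly. \<forall>a b :: real.
           2 * peval P a b = peval P (- a - b) a - peval P (- a - b) b}"

definition ady :: "nat \<Rightarrow> ncpoly" where
  "ady i = ((\<lambda>f. brA (genA LY) f) ^^ i) (genA LX)"

definition lP :: "bipoly \<Rightarrow> ncpoly" where
  "lP P = (\<lambda>w. \<Sum>(i, j)\<in>supp2 P. P (i, j) * brA (ady i) (ady j) w)"

definition Phi :: "ncpoly \<Rightarrow> bipoly" where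
  "Phi f = (THE P. P \<in> AntiPoly \<and> Dx f = lP P)"

end

theory Submission
  imports Defs "HOL-Computational_Algebra.Polynomial"
begin


definition dl :: "letter list \<Rightarrow> ncpoly" where
  "dl z = (\<lambda>w. if w = z then 1 else 0)"

definition spt :: "ncpoly \<Rightarrow> letter list set" where
  "spt u = {w. u w \<noteq> 0}"

abbreviation xc :: "letter list \<Rightarrow> nat" where
  "xc w \<equiv> count_list w LX"

fun mon :: "(nat \<Rightarrow> 'a::comm_ring_1) \<Rightarrow> letter list \<Rightarrow> 'a" where
  "mon t [] = 1"
| "mon t (LY # w) = t 0 * mon t w"
| "mon t (LX # w) = mon (\<lambda>i. t (Suc i)) w"

definition EV :: "ncpoly \<Rightarrow> (nat \<Rightarrow> real) \<Rightarrow> real" where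
  "EV u t = (\<Sum>w\<in>spt u. u w * mon t w)"

definition xcomp :: "nat \<Rightarrow> ncpoly \<Rightarrow> ncpoly" where
  "xcomp k u = (\<lambda>w. if count_list w LX = k then u w else 0)"

definition sh :: "nat \<Rightarrow> (nat \<Rightarrow> 'a) \<Rightarrow> nat \<Rightarrow> 'a" where
  "sh i t = (\<lambda>m. t (m + i))"

lemma genA_dl: "genA c = dl [c]"
  by (simp add: genA_def dl_def)

lemma Afin_spt: "u \<in> Afin \<longleftrightarrow> finite (spt u)"
  by (simp add: Afin_def spt_def)

lemma Afin_add[intro]: "f \<in> Afin \<Longrightarrow> g \<in> Afin \<Longrightarrow> addA f g \<in> Afin"
  unfolding Afin_def addA_def
  by (auto intro: finite_subset[of _ "{w. f w \<noteq> 0} \<union> {w. g w \<noteq> 0}"])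

lemma Afin_sub[intro]: "f \<in> Afin \<Longrightarrow> g \<in> Afin \<Longrightarrow> subA f g \<in> Afin"
  unfolding Afin_def subA_def
  by (auto intro: finite_subset[of _ "{w. f w \<noteq> 0} \<union> {w. g w \<noteq> 0}"])

lemma Afin_smul[intro]: "f \<in> Afin \<Longrightarrow> smulA c f \<in> Afin"
  unfolding Afin_def smulA_def
  by (auto intro: finite_subset[of _ "{w. f w \<noteq> 0}"])

lemma Afin_zero[intro]: "zeroA \<in> Afin"
  by (simp add: Afin_def zeroA_def)

lemma Afin_dl[intro]: "dl z \<in> Afin"
  by (simp add: Afin_def dl_def)

lemma Afin_sum[intro]:
  assumes "finite S" "\<And>a. a \<in> S \<Longrightarrow> F a \<in> Afin"
  shows "(\<lambda>w. \<Sum>a\<in>S. F a w) \<in> Afin"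
proof -
  have "{w. (\<Sum>a\<in>S. F a w) \<noteq> 0} \<subseteq> (\<Union>a\<in>S. {w. F a w \<noteq> 0})"
    by (auto elim: sum.not_neutral_contains_not_neutral)
  moreover have "finite (\<Union>a\<in>S. {w. F a w \<noteq> 0})"
    using assms by (auto simp: Afin_def)
  ultimately show ?thesis by (auto simp: Afin_def intro: finite_subset)
qed

lemma Afin_pmul[intro]: "f \<in> Afin \<Longrightarrow> (\<lambda>w. c * f w) \<in> Afin"
  using Afin_smul[of f c] by (simp add: smulA_def)

lemma pt_expand:
  assumes "finite S" "spt u \<subseteq> S"
  shows "u z = (\<Sum>a\<in>S. u a * dl a z)"
proof -
  have "(\<Sum>a\<in>S. u a * dl a z) = (\<Sum>a\<in>S. if a = z then u z else 0)"
    by (rule sum.cong) (auto simp: dl_def)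
  also have "\<dots> = (if z \<in> S then u z else 0)"
    using assms(1) by (simp add: sum.delta')
  also have "\<dots> = u z" using assms(2) by (auto simp: spt_def)
  finally show ?thesis by simp
qed

lemma sum_take_drop_ind:
  "(\<Sum>n\<in>{0..length w}. (if take n w = a \<and> drop n w = b then 1 else (0::real)))
     = (if w = a @ b then 1 else 0)"
proof (cases "w = a @ b")
  case True
  have "(\<Sum>n\<in>{0..length w}. (if take n w = a \<and> drop n w = b then 1 else (0::real)))
      = (\<Sum>n\<in>{0..length w}. (if n = length a then 1 else 0))"
  proof (rule sum.cong[OF refl])
    fix n assume n: "n \<in> {0..length w}"
    have "take n w = a \<and> drop n w = b \<longleftrightarrow> n = length a"
    proof
      assume "take n w = a \<and> drop n w = b"
      then have "length (take n w) = length a" by simp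
      then show "n = length a" using n by simp
    qed (simp add: True)
    then show "(if take n w = a \<and> drop n w = b then 1 else (0::real)) = (if n = length a then 1 else 0)"
      by simp
  qed
  also have "\<dots> = 1" using True by (simp add: sum.delta)
  finally show ?thesis using True by simp
next
  case False
  then have "\<And>n. \<not> (take n w = a \<and> drop n w = b)" by (metis append_take_drop_id)
  then have "(\<Sum>n\<in>{0..length w}. (if take n w = a \<and> drop n w = b then 1 else (0::real))) = 0"
    by (intro sum.neutral) simp
  then show ?thesis using False by simp
qed

lemma mulA_expand:
  assumes "finite S" "spt u \<subseteq> S" "finite T" "spt v \<subseteq> T"
  shows "mulA u v w = (\<Sum>a\<in>S. \<Sum>b\<in>T. u a * v b * dl (a @ b) w)"
proof -
  have "mulA u v w = (\<Sum>n\<in>{0..length w}. u (take n w) * v (drop n w))"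
    unfolding mulA_def ..
  also have "\<dots> = (\<Sum>n\<in>{0..length w}. (\<Sum>a\<in>S. u a * dl a (take n w)) * (\<Sum>b\<in>T. v b * dl b (drop n w)))"
    by (rule sum.cong[OF refl], subst pt_expand[OF assms(1,2)], subst pt_expand[OF assms(3,4)], rule refl)
  also have "\<dots> = (\<Sum>n\<in>{0..length w}. \<Sum>a\<in>S. \<Sum>b\<in>T. u a * v b * (if take n w = a \<and> drop n w = b then 1 else 0))"
    unfolding sum_product by (rule sum.cong[OF refl], rule sum.cong[OF refl], rule sum.cong[OF refl]) (simp add: dl_def)
  also have "\<dots> = (\<Sum>a\<in>S. \<Sum>n\<in>{0..length w}. \<Sum>b\<in>T. u a * v b * (if take n w = a \<and> drop n w = b then 1 else 0))"
    by (rule sum.swap)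
  also have "\<dots> = (\<Sum>a\<in>S. \<Sum>b\<in>T. \<Sum>n\<in>{0..length w}. u a * v b * (if take n w = a \<and> drop n w = b then 1 else 0))"
    by (rule sum.cong[OF refl], rule sum.swap)
  also have "\<dots> = (\<Sum>a\<in>S. \<Sum>b\<in>T. u a * v b * dl (a @ b) w)"
    unfolding sum_distrib_left[symmetric] sum_take_drop_ind by (simp add: dl_def)
  finally show ?thesis .
qed

lemma spt_mulA: "spt (mulA u v) \<subseteq> (\<lambda>(a, b). a @ b) ` (spt u \<times> spt v)"
proof
  fix w assume "w \<in> spt (mulA u v)"
  then obtain n where "u (take n w) * v (drop n w) \<noteq> 0"
    unfolding spt_def mulA_def by (auto elim: sum.not_neutral_contains_not_neutral)
  then show "w \<in> (\<lambda>(a, b). a @ b) ` (spt u \<times> spt v)"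
    unfolding spt_def image_iff by (intro bexI[of _ "(take n w, drop n w)"]) auto
qed

lemma Afin_mul[intro]: "f \<in> Afin \<Longrightarrow> g \<in> Afin \<Longrightarrow> mulA f g \<in> Afin"
  unfolding Afin_spt using spt_mulA by (meson finite_SigmaI finite_imageI finite_subset)

lemma Afin_br[intro]: "f \<in> Afin \<Longrightarrow> g \<in> Afin \<Longrightarrow> brA f g \<in> Afin"
  unfolding brA_def by auto

lemma freeLie_Afin: "f \<in> freeLie \<Longrightarrow> f \<in> Afin"
  by (induction rule: freeLie.induct) (auto simp: genA_dl)

lemma mulA_dl: "mulA (dl a) (dl b) = dl (a @ b)"
proof
  fix w
  have "mulA (dl a) (dl b) w = (\<Sum>a'\<in>{a}. \<Sum>b'\<in>{b}. dl a a' * dl b b' * dl (a' @ b') w)"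
    by (rule mulA_expand) (auto simp: spt_def dl_def)
  then show "mulA (dl a) (dl b) w = dl (a @ b) w" by (simp add: dl_def)
qed

lemma lspan_sub: "f \<in> lspan X \<Longrightarrow> g \<in> lspan X \<Longrightarrow> subA f g \<in> lspan X"
proof -
  assume "f \<in> lspan X" "g \<in> lspan X"
  then have "addA f (smulA (-1) g) \<in> lspan X" by (intro lspan_add lspan_smul)
  moreover have "addA f (smulA (-1) g) = subA f g" by (simp add: addA_def smulA_def subA_def)
  ultimately show ?thesis by simp
qed

lemma lspan_pmul: "f \<in> lspan X \<Longrightarrow> (\<lambda>w. c * f w) \<in> lspan X"
  using lspan_smul[of f X c] by (simp add: smulA_def)

lemma lspan_sum:
  assumes "finite S" "\<And>a. a \<in> S \<Longrightarrow> F a \<in> lspan X"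
  shows "(\<lambda>w. \<Sum>a\<in>S. F a w) \<in> lspan X"
  using assms
proof (induction S rule: finite_induct)
  case empty
  then show ?case using lspan_zero[of X] by (simp add: zeroA_def)
next
  case (insert a S)
  then have "addA (F a) (\<lambda>w. \<Sum>a\<in>S. F a w) \<in> lspan X" by (intro lspan_add) auto
  then show ?case using insert by (simp add: addA_def)
qed

lemma freeLie_sum:
  assumes "finite S" "\<And>a. a \<in> S \<Longrightarrow> F a \<in> freeLie"
  shows "(\<lambda>w. \<Sum>a\<in>S. F a w) \<in> freeLie"
  using assms
proof (induction S rule: finite_induct)
  case empty
  then show ?case using fl_zero by (simp add: zeroA_def)
next
  case (insert a S)
  then have "addA (F a) (\<lambda>w. \<Sum>a\<in>S. F a w) \<in> freeLie" by (intro fl_add) auto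
  then show ?case using insert by (simp add: addA_def)
qed

lemma mon_append: "mon t (v @ w) = mon t v * mon (\<lambda>i. t (i + xc v)) w"
proof (induction v arbitrary: t)
  case Nil
  then show ?case by simp
next
  case (Cons c v)
  then show ?case by (cases c) (simp_all add: mult_ac)
qed

lemma mon_cong: "(\<And>i. i \<le> xc w \<Longrightarrow> t i = t' i) \<Longrightarrow> mon t w = mon t' w"
proof (induction w arbitrary: t t')
  case Nil
  then show ?case by simp
next
  case (Cons c w)
  show ?case
  proof (cases c)
    case LX
    have "mon (\<lambda>i. t (Suc i)) w = mon (\<lambda>i. t' (Suc i)) w"
    proof (rule Cons.IH)
      fix i assume "i \<le> xc w"
      then have "Suc i \<le> xc (c # w)" using LX by simp
      then show "t (Suc i) = t' (Suc i)" by (rule Cons.prems)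
    qed
    then show ?thesis using LX by simp
  next
    case LY
    have "mon t w = mon t' w"
    proof (rule Cons.IH)
      fix i assume "i \<le> xc w"
      then have "i \<le> xc (c # w)" using LY by simp
      then show "t i = t' i" by (rule Cons.prems)
    qed
    moreover have "t 0 = t' 0" by (rule Cons.prems) simp
    ultimately show ?thesis using LY by simp
  qed
qed

lemma mon_replicate_y: "mon t (replicate n LY @ w) = t 0 ^ n * mon t w"
  by (induction n) (simp_all add: mult_ac)

lemma EV_superset:
  assumes "finite S" "spt u \<subseteq> S"
  shows "EV u t = (\<Sum>w\<in>S. u w * mon t w)"
  unfolding EV_def
  by (rule sum.mono_neutral_left) (use assms in \<open>auto simp: spt_def\<close>)

lemma EV_sum:
  assumes "finite S" "\<And>a. a \<in> S \<Longrightarrow> F a \<in> Afin"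
  shows "EV (\<lambda>w. \<Sum>a\<in>S. F a w) t = (\<Sum>a\<in>S. EV (F a) t)"
proof -
  define U where "U = (\<Union>a\<in>S. spt (F a))"
  have fU: "finite U" using assms by (auto simp: U_def Afin_spt)
  have "spt (\<lambda>w. \<Sum>a\<in>S. F a w) \<subseteq> U"
    by (auto simp: U_def spt_def elim: sum.not_neutral_contains_not_neutral)
  then have "EV (\<lambda>w. \<Sum>a\<in>S. F a w) t = (\<Sum>w\<in>U. (\<Sum>a\<in>S. F a w) * mon t w)"
    by (rule EV_superset[OF fU])
  also have "\<dots> = (\<Sum>a\<in>S. \<Sum>w\<in>U. F a w * mon t w)"
    by (simp add: sum_distrib_right sum.swap[of _ U])
  also have "\<dots> = (\<Sum>a\<in>S. EV (F a) t)"
    by (rule sum.cong[OF refl], rule EV_superset[symmetric, OF fU]) (auto simp: U_def)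
  finally show ?thesis .
qed

lemma EV_add: "f \<in> Afin \<Longrightarrow> g \<in> Afin \<Longrightarrow> EV (addA f g) t = EV f t + EV g t"
proof -
  assume a: "f \<in> Afin" "g \<in> Afin"
  define U where "U = spt f \<union> spt g"
  have fU: "finite U" using a by (auto simp: U_def Afin_spt)
  have "EV (addA f g) t = (\<Sum>w\<in>U. addA f g w * mon t w)"
    by (rule EV_superset[OF fU]) (auto simp: U_def spt_def addA_def)
  also have "\<dots> = (\<Sum>w\<in>U. f w * mon t w) + (\<Sum>w\<in>U. g w * mon t w)"
    by (simp add: addA_def distrib_right sum.distrib)
  also have "\<dots> = EV f t + EV g t"
    using EV_superset[OF fU, of f t] EV_superset[OF fU, of g t] by (simp add: U_def)
  finally show ?thesis .
qed

lemma EV_sub: "f \<in> Afin \<Longrightarrow> g \<in> Afin \<Longrightarrow> EV (subA f g) t = EV f t - EV g t"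
proof -
  assume a: "f \<in> Afin" "g \<in> Afin"
  define U where "U = spt f \<union> spt g"
  have fU: "finite U" using a by (auto simp: U_def Afin_spt)
  have "EV (subA f g) t = (\<Sum>w\<in>U. subA f g w * mon t w)"
    by (rule EV_superset[OF fU]) (auto simp: U_def spt_def subA_def)
  also have "\<dots> = (\<Sum>w\<in>U. f w * mon t w) - (\<Sum>w\<in>U. g w * mon t w)"
    by (simp add: subA_def left_diff_distrib sum_subtractf)
  also have "\<dots> = EV f t - EV g t"
    using EV_superset[OF fU, of f t] EV_superset[OF fU, of g t] by (simp add: U_def)
  finally show ?thesis .
qed

lemma EV_smul: "EV (smulA c f) t = c * EV f t"
proof (cases "c = 0")
  case True
  then show ?thesis by (simp add: EV_def smulA_def spt_def)
next
  case False
  then have "spt (smulA c f) = spt f" by (auto simp: spt_def smulA_def)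
  then show ?thesis by (simp add: EV_def smulA_def sum_distrib_left mult_ac)
qed

lemma EV_pmul: "EV (\<lambda>w. c * f w) t = c * EV f t"
  using EV_smul[of c f t] by (simp add: smulA_def)

lemma EV_zero: "EV zeroA t = 0"
  by (simp add: EV_def zeroA_def spt_def)

lemma EV_dl: "EV (dl z) t = mon t z"
  by (subst EV_superset[of "{z}"]) (auto simp: spt_def dl_def)

lemma EV_expand: "finite S \<Longrightarrow> EV (\<lambda>w. \<Sum>a\<in>S. c a * dl (g a) w) t = (\<Sum>a\<in>S. c a * mon t (g a))"
  by (subst EV_sum) (auto simp: EV_pmul EV_dl)

lemma EV_cong:
  assumes "xhomog k u" "\<And>m. m \<le> k \<Longrightarrow> t m = t' m"
  shows "EV u t = EV u t'"
  unfolding EV_def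
proof (rule sum.cong[OF refl])
  fix w assume "w \<in> spt u"
  then have "xc w = k" using assms(1) by (auto simp: spt_def xhomog_def)
  then show "u w * mon t w = u w * mon t' w" using assms(2) by (metis mon_cong)
qed


lemma EV_mul:
  assumes "u \<in> Afin" "v \<in> Afin" "xhomog i u"
  shows "EV (mulA u v) t = EV u t * EV v (sh i t)"
proof -
  let ?S = "spt u" and ?T = "spt v"
  have f: "finite ?S" "finite ?T" using assms by (auto simp: Afin_spt)
  have m: "mulA u v = (\<lambda>w. \<Sum>p\<in>?S \<times> ?T. (u (fst p) * v (snd p)) * dl (fst p @ snd p) w)"
  proof
    fix w
    have "mulA u v w = (\<Sum>a\<in>?S. \<Sum>b\<in>?T. u a * v b * dl (a @ b) w)"
      using mulA_expand[OF f(1) _ f(2)] by blast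
    also have "\<dots> = (\<Sum>p\<in>?S \<times> ?T. (u (fst p) * v (snd p)) * dl (fst p @ snd p) w)"
      unfolding sum.cartesian_product by (rule sum.cong) auto
    finally show "mulA u v w = (\<Sum>p\<in>?S \<times> ?T. (u (fst p) * v (snd p)) * dl (fst p @ snd p) w)" .
  qed
  have "EV (mulA u v) t = (\<Sum>p\<in>?S \<times> ?T. (u (fst p) * v (snd p)) * mon t (fst p @ snd p))"
    unfolding m by (rule EV_expand) (use f in simp)
  also have "\<dots> = (\<Sum>p\<in>?S \<times> ?T. (u (fst p) * mon t (fst p)) * (v (snd p) * mon (sh i t) (snd p)))"
  proof (rule sum.cong[OF refl])
    fix p assume "p \<in> ?S \<times> ?T"
    then have "xc (fst p) = i" using assms(3) by (auto simp: spt_def xhomog_def)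
    then show "(u (fst p) * v (snd p)) * mon t (fst p @ snd p) = (u (fst p) * mon t (fst p)) * (v (snd p) * mon (sh i t) (snd p))"
      by (simp add: mon_append sh_def)
  qed
  also have "\<dots> = (\<Sum>a\<in>?S. \<Sum>b\<in>?T. (u a * mon t a) * (v b * mon (sh i t) b))"
    unfolding sum.cartesian_product by (rule sum.cong) auto
  also have "\<dots> = EV u t * EV v (sh i t)"
    unfolding EV_def sum_product ..
  finally show ?thesis .
qed

lemma mulA_expand2:
  assumes "u \<in> Afin" "v \<in> Afin"
  shows "mulA u v = (\<lambda>w. \<Sum>p\<in>spt u \<times> spt v. (u (fst p) * v (snd p)) * dl (fst p @ snd p) w)"
proof
  fix w
  have f: "finite (spt u)" "finite (spt v)" using assms by (auto simp: Afin_spt)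
  have "mulA u v w = (\<Sum>a\<in>spt u. \<Sum>b\<in>spt v. u a * v b * dl (a @ b) w)"
    using mulA_expand[OF f(1) _ f(2)] by blast
  also have "\<dots> = (\<Sum>p\<in>spt u \<times> spt v. (u (fst p) * v (snd p)) * dl (fst p @ snd p) w)"
    unfolding sum.cartesian_product by (rule sum.cong) auto
  finally show "mulA u v w = (\<Sum>p\<in>spt u \<times> spt v. (u (fst p) * v (snd p)) * dl (fst p @ snd p) w)" .
qed

lemma expand: "u \<in> Afin \<Longrightarrow> u = (\<lambda>w. \<Sum>a\<in>spt u. u a * dl a w)"
  by (rule ext, rule pt_expand) (auto simp: Afin_spt)

lemma mulA_sum_right: "mulA f (\<lambda>w. \<Sum>a\<in>S. F a w) = (\<lambda>w. \<Sum>a\<in>S. mulA f (F a) w)"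
  unfolding mulA_def by (rule ext) (simp add: sum_distrib_left sum.swap[of _ _ S])

lemma mulA_pmul_right: "mulA f (\<lambda>w. c * g w) = (\<lambda>w. c * mulA f g w)"
  unfolding mulA_def by (rule ext) (simp add: sum_distrib_left mult_ac)

lemma Dx_sum: "Dx (\<lambda>w. \<Sum>a\<in>S. F a w) = (\<lambda>u. \<Sum>a\<in>S. Dx (F a) u)"
  unfolding Dx_def by (rule ext) (rule sum.swap)

lemma Dx_pmul: "Dx (\<lambda>w. c * f w) = (\<lambda>u. c * Dx f u)"
  unfolding Dx_def by (rule ext) (simp add: sum_distrib_left)

lemma Dx_add: "Dx (addA f g) = addA (Dx f) (Dx g)"
  unfolding Dx_def addA_def by (rule ext) (simp add: sum.distrib)

lemma Dx_sub: "Dx (subA f g) = subA (Dx f) (Dx g)"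
  unfolding Dx_def subA_def by (rule ext) (simp add: sum_subtractf)

lemma Dx_smul: "Dx (smulA c f) = smulA c (Dx f)"
  unfolding Dx_def smulA_def by (rule ext) (simp add: sum_distrib_left)

lemma Dx_zero: "Dx zeroA = zeroA"
  unfolding Dx_def zeroA_def by simp

definition decs :: "letter list \<Rightarrow> (letter list \<times> letter list) set" where
  "decs z = {q. fst q @ LX # snd q = z}"

lemma decs_Nil: "decs [] = {}"
  by (auto simp: decs_def)

lemma decs_Cons: "decs (c # z) = (if c = LX then {([], z)} else {}) \<union> (\<lambda>q. (c # fst q, snd q)) ` decs z"
proof (intro set_eqI iffI)
  fix q assume "q \<in> decs (c # z)"
  then have e: "fst q @ LX # snd q = c # z" by (simp add: decs_def)
  show "q \<in> (if c = LX then {([], z)} else {}) \<union> (\<lambda>q. (c # fst q, snd q)) ` decs z"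
  proof (cases "fst q")
    case Nil
    then show ?thesis using e by (cases q) auto
  next
    case (Cons c' p')
    then have "q = (\<lambda>q. (c # fst q, snd q)) (p', snd q)" "(p', snd q) \<in> decs z"
      using e by (auto simp: decs_def prod_eq_iff)
    then show ?thesis by blast
  qed
next
  fix q assume "q \<in> (if c = LX then {([], z)} else {}) \<union> (\<lambda>q. (c # fst q, snd q)) ` decs z"
  then show "q \<in> decs (c # z)" by (auto simp: decs_def split: if_splits)
qed

lemma finite_decs: "finite (decs z)"
  by (induction z) (simp_all add: decs_Nil decs_Cons)

lemma decs_sum: "(\<Sum>q\<in>decs z. g (xc (fst q))) = (\<Sum>j<xc z. (g j :: 'a::comm_monoid_add))"
proof (induction z arbitrary: g)
  case Nil
  then show ?case by (simp add: decs_Nil)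
next
  case (Cons c z)
  have inj: "inj_on (\<lambda>q. (c # fst q, snd q)) (decs z)" by (auto simp: inj_on_def prod_eq_iff)
  have img: "(\<Sum>q\<in>(\<lambda>q. (c # fst q, snd q)) ` decs z. g (xc (fst q))) = (\<Sum>q\<in>decs z. g (xc (c # fst q)))"
    by (subst sum.reindex[OF inj]) (simp add: comp_def)
  show ?case
  proof (cases c)
    case LX
    have d: "([], z) \<notin> (\<lambda>q. (LX # fst q, snd q)) ` decs z" by auto
    have "(\<Sum>q\<in>decs (c # z). g (xc (fst q))) = g 0 + (\<Sum>q\<in>decs z. g (Suc (xc (fst q))))"
      using img LX d by (simp add: decs_Cons finite_decs)
    also have "\<dots> = g 0 + (\<Sum>j<xc z. g (Suc j))" using Cons.IH[of "\<lambda>j. g (Suc j)"] by simp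
    also have "\<dots> = (\<Sum>j<Suc (xc z). g j)" by (rule sum.lessThan_Suc_shift[symmetric])
    also have "\<dots> = (\<Sum>j<xc (c # z). g j)" using LX by simp
    finally show ?thesis .
  next
    case LY
    have "(\<Sum>q\<in>decs (c # z). g (xc (fst q))) = (\<Sum>q\<in>decs z. g (xc (fst q)))"
      using img LY by (simp add: decs_Cons)
    then show ?thesis using Cons.IH[of g] LY by simp
  qed
qed

lemma drop_take_rotate:
  assumes "k \<le> length u"
  shows "drop k u @ LX # take k u = rotate (Suc k) (LX # u)"
proof (cases "k = length u")
  case True
  have "rotate (Suc k) (LX # u) = LX # u" by (rule rotate_id) (simp add: True)
  then show ?thesis using True by simp
next
  case False
  then have "Suc k mod length (LX # u) = Suc k" using assms by simp
  then show ?thesis by (simp add: rotate_drop_take)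
qed

lemma rot_sum_shift:
  fixes g :: "'a list \<Rightarrow> real"
  assumes "n = length X"
  shows "(\<Sum>m<n. g (rotate (m + a) X)) = (\<Sum>m<n. g (rotate m X))"
proof (induction a)
  case 0
  then show ?case by simp
next
  case (Suc a)
  have per: "rotate (n + a) X = rotate a X"
  proof -
    have "rotate (n + a) X = rotate ((n + a) mod length X) X" by (rule rotate_conv_mod)
    also have "(n + a) mod length X = a mod length X" using assms by simp
    also have "rotate (a mod length X) X = rotate a X" by (rule rotate_conv_mod[symmetric])
    finally show ?thesis .
  qed
  have "(\<Sum>m<Suc n. g (rotate (m + a) X)) = g (rotate a X) + (\<Sum>m<n. g (rotate (Suc m + a) X))"
    by (subst sum.lessThan_Suc_shift) simp
  moreover have "(\<Sum>m<Suc n. g (rotate (m + a) X)) = (\<Sum>m<n. g (rotate (m + a) X)) + g (rotate (n + a) X)"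
    by simp
  ultimately have "(\<Sum>m<n. g (rotate (Suc m + a) X)) = (\<Sum>m<n. g (rotate (m + a) X))"
    using per by simp
  then show ?case using Suc.IH by simp
qed

lemma Dx_dl_rot: "Dx (dl z) u = (\<Sum>m<Suc (length u). if rotate m (LX # u) = z then 1 else 0)"
proof -
  have "Dx (dl z) u = (\<Sum>k\<in>{0..length u}. if rotate (Suc k) (LX # u) = z then 1 else 0)"
    unfolding Dx_def dl_def by (rule sum.cong[OF refl]) (simp add: drop_take_rotate)
  also have "\<dots> = (\<Sum>m<Suc (length u). if rotate (m + 1) (LX # u) = z then 1 else 0)"
    by (rule sum.cong) auto
  also have "\<dots> = (\<Sum>m<Suc (length u). if rotate m (LX # u) = z then 1 else 0)"
    using rot_sum_shift[of "Suc (length u)" "LX # u" "\<lambda>y. if y = z then 1 else 0" 1] by simp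
  finally show ?thesis .
qed

lemma rot_count_swap:
  assumes "n = length X"
  shows "(\<Sum>m<n. if rotate m X = v @ w then 1 else (0::real)) = (\<Sum>m<n. if rotate m X = w @ v then 1 else 0)"
proof -
  have key: "rotate (m + length v) X = w @ v \<longleftrightarrow> rotate m X = v @ w" for m
  proof
    assume a: "rotate (m + length v) X = w @ v"
    have "rotate m X = rotate (length w) (rotate (length v) (rotate m X))"
    proof -
      have "rotate (length w) (rotate (length v) (rotate m X)) = rotate (length w + length v) (rotate m X)"
        by (simp add: rotate_rotate add.assoc)
      also have "\<dots> = rotate m X"
        using a by (intro rotate_id) (metis add.commute length_append length_rotate mod_self rotate_rotate)
      finally show ?thesis by simp
    qed
    also have "rotate (length v) (rotate m X) = w @ v" using a by (simp add: rotate_rotate add.commute)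
    also have "rotate (length w) (w @ v) = v @ w" by (rule rotate_append)
    finally show "rotate m X = v @ w" .
  next
    assume "rotate m X = v @ w"
    then have "rotate (length v) (rotate m X) = w @ v" by (simp add: rotate_append)
    then show "rotate (m + length v) X = w @ v" by (simp add: rotate_rotate add.commute)
  qed
  have "(\<Sum>m<n. if rotate m X = w @ v then 1 else (0::real)) = (\<Sum>m<n. if rotate (m + length v) X = w @ v then 1 else 0)"
    using rot_sum_shift[OF assms, of "\<lambda>y. if y = w @ v then 1 else 0" "length v"] by simp
  also have "\<dots> = (\<Sum>m<n. if rotate m X = v @ w then 1 else 0)"
    using key by simp
  finally show ?thesis by simp
qed

lemma Dx_dl_swap: "Dx (dl (v @ w)) = Dx (dl (w @ v))"
  by (rule ext, simp only: Dx_dl_rot, rule rot_count_swap, simp)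

lemma Dx_dl_decs: "Dx (dl z) u = (\<Sum>q\<in>decs z. dl (snd q @ fst q) u)"
proof -
  define A where "A = {k\<in>{0..length u}. drop k u @ LX # take k u = z}"
  define B where "B = {q\<in>decs z. snd q @ fst q = u}"
  have "Dx (dl z) u = (\<Sum>k\<in>{0..length u}. if drop k u @ LX # take k u = z then 1 else 0)"
    unfolding Dx_def dl_def by (rule sum.cong) auto
  also have "\<dots> = (\<Sum>k\<in>A. 1)" unfolding A_def by (rule sum.inter_filter[symmetric]) simp
  also have "\<dots> = (\<Sum>q\<in>B. 1)"
  proof (rule sum.reindex_bij_betw)
    show "bij_betw (\<lambda>k. (drop k u, take k u)) A B"
    proof (rule bij_betw_imageI)
      show "inj_on (\<lambda>k. (drop k u, take k u)) A"
      proof (rule inj_onI)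
        fix k k' assume "k \<in> A" "k' \<in> A" "(drop k u, take k u) = (drop k' u, take k' u)"
        then have "length (take k u) = length (take k' u)" "k \<le> length u" "k' \<le> length u"
          by (auto simp: A_def)
        then show "k = k'" by simp
      qed
      show "(\<lambda>k. (drop k u, take k u)) ` A = B"
      proof (intro set_eqI iffI)
        fix q assume "q \<in> (\<lambda>k. (drop k u, take k u)) ` A"
        then show "q \<in> B" by (auto simp: A_def B_def decs_def)
      next
        fix q assume q: "q \<in> B"
        then have e1: "fst q @ LX # snd q = z" and e2: "snd q @ fst q = u" by (auto simp: B_def decs_def)
        define k where "k = length (snd q)"
        have "drop k u = fst q" "take k u = snd q" using e2 by (auto simp: k_def)
        moreover have "k \<in> A" using e1 e2 \<open>drop k u = fst q\<close> \<open>take k u = snd q\<close>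
          by (auto simp: A_def k_def)
        ultimately show "q \<in> (\<lambda>k. (drop k u, take k u)) ` A"
          by (intro image_eqI[of _ _ k]) auto
      qed
    qed
  qed
  also have "\<dots> = (\<Sum>q\<in>decs z. if snd q @ fst q = u then 1 else 0)"
    unfolding B_def by (rule sum.inter_filter) (rule finite_decs)
  also have "\<dots> = (\<Sum>q\<in>decs z. dl (snd q @ fst q) u)"
    by (rule sum.cong) (auto simp: dl_def)
  finally show ?thesis .
qed

lemma Dx_dl_fun: "Dx (dl z) = (\<lambda>u. \<Sum>q\<in>decs z. dl (snd q @ fst q) u)"
  by (rule ext) (rule Dx_dl_decs)

lemma Afin_Dx_dl: "Dx (dl z) \<in> Afin"
  unfolding Dx_dl_fun by (rule Afin_sum) (auto simp: finite_decs)

lemma Dx_expand: "h \<in> Afin \<Longrightarrow> Dx h = (\<lambda>u. \<Sum>a\<in>spt h. h a * Dx (dl a) u)"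
proof -
  assume h: "h \<in> Afin"
  have "Dx h = Dx (\<lambda>w. \<Sum>a\<in>spt h. h a * dl a w)" using expand[OF h] by simp
  also have "\<dots> = (\<lambda>u. \<Sum>a\<in>spt h. h a * Dx (dl a) u)"
    unfolding Dx_sum by (simp add: Dx_pmul)
  finally show ?thesis .
qed

lemma Afin_Dx: "h \<in> Afin \<Longrightarrow> Dx h \<in> Afin"
  by (subst Dx_expand) (auto simp: Afin_spt[symmetric] intro!: Afin_sum Afin_pmul Afin_Dx_dl)

lemma count_drop_take: "xc (drop k u) + xc (take k u) = xc u"
  by (metis add.commute append_take_drop_id count_list_append)

lemma xhomog_Dx: "xhomog (Suc k) h \<Longrightarrow> xhomog k (Dx h)"
  unfolding xhomog_def
proof (intro allI impI)
  fix u assume H: "\<forall>w. h w \<noteq> 0 \<longrightarrow> xc w = Suc k" and "Dx h u \<noteq> 0"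
  then obtain j where "h (drop j u @ LX # take j u) \<noteq> 0"
    unfolding Dx_def by (auto elim: sum.not_neutral_contains_not_neutral)
  then have "xc (drop j u @ LX # take j u) = Suc k" using H by blast
  then show "xc u = k" using count_drop_take[of j u] by simp
qed

lemma comp_Dx: "xcomp k (Dx h) = Dx (xcomp (Suc k) h)"
proof
  fix u
  have "\<And>j. xc (drop j u @ LX # take j u) = Suc (xc u)" using count_drop_take by simp
  then show "xcomp k (Dx h) u = Dx (xcomp (Suc k) h) u"
    unfolding xcomp_def Dx_def by simp
qed

lemma Dx_mul_swap:
  assumes "a \<in> Afin" "b \<in> Afin"
  shows "Dx (mulA a b) = Dx (mulA b a)"
proof -
  let ?S = "spt a" and ?T = "spt b"
  have f: "finite ?S" "finite ?T" using assms by (auto simp: Afin_spt)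
  have "Dx (mulA a b) = (\<lambda>u. \<Sum>p\<in>?S \<times> ?T. (a (fst p) * b (snd p)) * Dx (dl (fst p @ snd p)) u)"
    unfolding mulA_expand2[OF assms] Dx_sum by (simp add: Dx_pmul)
  also have "\<dots> = (\<lambda>u. \<Sum>p\<in>?S \<times> ?T. (a (fst p) * b (snd p)) * Dx (dl (snd p @ fst p)) u)"
    by (simp add: Dx_dl_swap)
  also have "\<dots> = (\<lambda>u. \<Sum>p\<in>?T \<times> ?S. (b (fst p) * a (snd p)) * Dx (dl (fst p @ snd p)) u)"
  proof (rule ext)
    fix u
    have "(\<Sum>p\<in>?T \<times> ?S. (b (fst p) * a (snd p)) * Dx (dl (fst p @ snd p)) u)
        = (\<Sum>p\<in>prod.swap ` (?S \<times> ?T). (b (fst p) * a (snd p)) * Dx (dl (fst p @ snd p)) u)"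
      by (simp add: product_swap)
    also have "\<dots> = (\<Sum>p\<in>?S \<times> ?T. (a (fst p) * b (snd p)) * Dx (dl (snd p @ fst p)) u)"
      by (subst sum.reindex) (auto simp: mult_ac)
    finally show "(\<Sum>p\<in>?S \<times> ?T. (a (fst p) * b (snd p)) * Dx (dl (snd p @ fst p)) u)
        = (\<Sum>p\<in>?T \<times> ?S. (b (fst p) * a (snd p)) * Dx (dl (fst p @ snd p)) u)" by simp
  qed
  also have "\<dots> = Dx (mulA b a)"
    unfolding mulA_expand2[OF assms(2,1)] Dx_sum by (simp add: Dx_pmul)
  finally show ?thesis .
qed

lemma Dx_br: "a \<in> Afin \<Longrightarrow> b \<in> Afin \<Longrightarrow> Dx (brA a b) = zeroA"
  unfolding brA_def Dx_sub by (simp add: Dx_mul_swap subA_def zeroA_def)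

lemma Dx_comm: "h \<in> comm \<Longrightarrow> Dx h = zeroA"
  unfolding comm_def
proof (induction rule: lspan.induct)
  case lspan_zero
  then show ?case by (rule Dx_zero)
next
  case (lspan_base s)
  then show ?case using Dx_br by (auto simp: brA_def)
next
  case (lspan_add f g)
  show ?case unfolding Dx_add using lspan_add.IH by (simp add: addA_def zeroA_def)
next
  case (lspan_smul f c)
  show ?case unfolding Dx_smul using lspan_smul.IH by (simp add: smulA_def zeroA_def)
qed


definition tau :: "nat \<Rightarrow> (nat \<Rightarrow> 'a) \<Rightarrow> nat \<Rightarrow> 'a" where
  "tau j t = (\<lambda>m. t ((m + 2 - j) mod 3))"

lemma mon_rot:
  assumes "fst q @ LX # snd q = a" "xc a = 3"
  shows "mon t (snd q @ fst q) = mon (tau (xc (fst q)) t) a"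
proof -
  obtain p s where q: "q = (p, s)" by (cases q)
  have a: "a = p @ LX # s" using assms(1) q by simp
  define j where "j = xc p"
  have js: "xc s = 2 - j" "j \<le> 2" using assms(2) a j_def by auto
  let ?T = "tau j t"
  have "mon ?T a = mon ?T p * mon (\<lambda>i. ?T (Suc (i + j))) s"
    unfolding a by (simp add: mon_append j_def)
  also have "mon ?T p = mon (\<lambda>i. t (i + xc s)) p"
  proof (rule mon_cong)
    fix i assume "i \<le> xc p"
    then have "(i + 2 - j) mod 3 = i + xc s" using js j_def by simp
    then show "?T i = t (i + xc s)" by (simp add: tau_def)
  qed
  also have "mon (\<lambda>i. ?T (Suc (i + j))) s = mon t s"
  proof (rule mon_cong)
    fix i assume "i \<le> xc s"
    then have "(Suc (i + j) + 2 - j) mod 3 = i" using js by simp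
    then show "?T (Suc (i + j)) = t i" by (simp add: tau_def)
  qed
  finally have "mon ?T a = mon (\<lambda>i. t (i + xc s)) p * mon t s" .
  then show ?thesis using q j_def by (simp add: mon_append mult.commute)
qed

lemma EV_Dx_dl: "EV (Dx (dl a)) t = (\<Sum>q\<in>decs a. mon t (snd q @ fst q))"
  unfolding Dx_dl_fun by (subst EV_sum) (auto simp: finite_decs EV_dl)

lemma EV_Dx:
  assumes h: "h \<in> Afin" "xhomog 3 h"
  shows "EV (Dx h) t = (\<Sum>j<3. EV h (tau j t))"
proof -
  have fin: "finite (spt h)" using h by (simp add: Afin_spt)
  have "EV (Dx h) t = (\<Sum>a\<in>spt h. EV (\<lambda>u. h a * Dx (dl a) u) t)"
    unfolding Dx_expand[OF h(1)] by (rule EV_sum[OF fin]) (auto intro: Afin_Dx_dl)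
  also have "\<dots> = (\<Sum>a\<in>spt h. h a * (\<Sum>j<3. mon (tau j t) a))"
  proof (rule sum.cong[OF refl])
    fix a assume "a \<in> spt h"
    then have x3: "xc a = 3" using h(2) by (auto simp: spt_def xhomog_def)
    have "EV (Dx (dl a)) t = (\<Sum>q\<in>decs a. mon (tau (xc (fst q)) t) a)"
      unfolding EV_Dx_dl by (rule sum.cong[OF refl], rule mon_rot) (use x3 in \<open>auto simp: decs_def\<close>)
    also have "\<dots> = (\<Sum>j<3. mon (tau j t) a)"
      using decs_sum[of "\<lambda>j. mon (tau j t) a" a] x3 by simp
    finally show "EV (\<lambda>u. h a * Dx (dl a) u) t = h a * (\<Sum>j<3. mon (tau j t) a)"
      by (simp add: EV_pmul)
  qed
  also have "\<dots> = (\<Sum>j<3. \<Sum>a\<in>spt h. h a * mon (tau j t) a)"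
    by (simp add: sum_distrib_left sum.swap[of _ "spt h"])
  also have "\<dots> = (\<Sum>j<3. EV h (tau j t))"
    by (simp add: EV_def)
  finally show ?thesis .
qed

lemma comm_gen: "a \<in> Afin \<Longrightarrow> b \<in> Afin \<Longrightarrow> subA (mulA a b) (mulA b a) \<in> comm"
  unfolding comm_def by (rule lspan_base) blast

lemma Euler:
  assumes h: "h \<in> Afin" "xhomog 3 h"
  shows "subA (smulA 3 h) (mulA (genA LX) (Dx h)) \<in> comm"
proof -
  have fin: "finite (spt h)" using h by (simp add: Afin_spt)
  define G where "G q = subA (mulA (dl (fst q)) (dl (LX # snd q))) (mulA (dl (LX # snd q)) (dl (fst q)))" for q
  have m1: "mulA (genA LX) (Dx (dl a)) = (\<lambda>w. \<Sum>q\<in>decs a. dl (LX # snd q @ fst q) w)" for a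
    unfolding genA_dl Dx_dl_fun mulA_sum_right by (simp add: mulA_dl)
  have "subA (smulA 3 h) (mulA (genA LX) (Dx h)) = (\<lambda>w. \<Sum>a\<in>spt h. h a * (\<Sum>q\<in>decs a. G q w))"
  proof
    fix w
    have e1: "smulA 3 h w = (\<Sum>a\<in>spt h. h a * (3 * dl a w))"
      unfolding smulA_def by (subst pt_expand[OF fin, of h w]) (auto simp: sum_distrib_left mult_ac)
    have e2: "mulA (genA LX) (Dx h) w = (\<Sum>a\<in>spt h. h a * (\<Sum>q\<in>decs a. dl (LX # snd q @ fst q) w))"
      unfolding Dx_expand[OF h(1)] mulA_sum_right mulA_pmul_right m1 ..
    have e3: "3 * dl a w - (\<Sum>q\<in>decs a. dl (LX # snd q @ fst q) w) = (\<Sum>q\<in>decs a. G q w)"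
      if "a \<in> spt h" for a
    proof -
      have x3: "xc a = 3" using that h(2) by (auto simp: spt_def xhomog_def)
      have "(\<Sum>q\<in>decs a. dl a w) = 3 * dl a w"
        using decs_sum[of "\<lambda>j. dl a w" a] x3 by simp
      moreover have "G q w = dl a w - dl (LX # snd q @ fst q) w" if "q \<in> decs a" for q
        using that unfolding G_def by (simp add: mulA_dl subA_def decs_def)
      ultimately show ?thesis by (simp add: sum_subtractf)
    qed
    show "subA (smulA 3 h) (mulA (genA LX) (Dx h)) w = (\<Sum>a\<in>spt h. h a * (\<Sum>q\<in>decs a. G q w))"
      unfolding subA_def e1 e2 sum_subtractf[symmetric] right_diff_distrib[symmetric]
      by (rule sum.cong[OF refl]) (simp add: e3)
  qed
  moreover have "(\<lambda>w. \<Sum>a\<in>spt h. h a * (\<Sum>q\<in>decs a. G q w)) \<in> comm"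
    unfolding comm_def
    by (intro lspan_sum lspan_pmul fin finite_decs) (auto simp: G_def intro!: comm_gen[unfolded comm_def])
  ultimately show ?thesis by simp
qed


lemma comp_Afin[intro]: "u \<in> Afin \<Longrightarrow> xcomp k u \<in> Afin"
  unfolding Afin_def xcomp_def by (auto intro: finite_subset[of _ "{w. u w \<noteq> 0}"])

lemma xhomog_comp: "xhomog k (xcomp k u)"
  by (simp add: xhomog_def xcomp_def)

lemma comp_id: "xhomog k u \<Longrightarrow> xcomp k u = u"
  unfolding xhomog_def xcomp_def by (rule ext) auto

lemma comp_add: "xcomp k (addA f g) = addA (xcomp k f) (xcomp k g)"
  unfolding xcomp_def addA_def by (rule ext) simp

lemma comp_sub: "xcomp k (subA f g) = subA (xcomp k f) (xcomp k g)"
  unfolding xcomp_def subA_def by (rule ext) simp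

lemma comp_smul: "xcomp k (smulA c f) = smulA c (xcomp k f)"
  unfolding xcomp_def smulA_def by (rule ext) simp

lemma comp_zero: "xcomp k zeroA = zeroA"
  unfolding xcomp_def zeroA_def by (rule ext) simp

lemma xhomog_mulA: "xhomog i u \<Longrightarrow> xhomog j v \<Longrightarrow> xhomog (i + j) (mulA u v)"
  unfolding xhomog_def
proof (intro allI impI)
  fix w assume u: "\<forall>w. u w \<noteq> 0 \<longrightarrow> xc w = i" and v: "\<forall>w. v w \<noteq> 0 \<longrightarrow> xc w = j"
    and "mulA u v w \<noteq> 0"
  then obtain n where "u (take n w) * v (drop n w) \<noteq> 0"
    unfolding mulA_def by (auto elim: sum.not_neutral_contains_not_neutral)
  then have "xc (take n w) = i" "xc (drop n w) = j" using u v by auto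
  then show "xc w = i + j" using count_drop_take[of n w] by simp
qed

lemma sum_ind_split:
  "(\<Sum>i\<le>k. (if xc (take n w) = i \<and> xc (drop n w) = k - i then 1 else (0::real)))
     = (if xc w = k then 1 else 0)"
proof (cases "xc w = k")
  case True
  have "(\<Sum>i\<le>k. (if xc (take n w) = i \<and> xc (drop n w) = k - i then 1 else (0::real)))
       = (\<Sum>i\<le>k. (if i = xc (take n w) then 1 else 0))"
    by (rule sum.cong[OF refl]) (use True count_drop_take[of n w] in auto)
  also have "\<dots> = 1" using True count_drop_take[of n w] by simp
  finally show ?thesis using True by simp
next
  case False
  have "(\<Sum>i\<le>k. (if xc (take n w) = i \<and> xc (drop n w) = k - i then 1 else (0::real))) = 0"
    by (rule sum.neutral) (use False count_drop_take[of n w] in auto)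
  then show ?thesis using False by simp
qed

lemma comp_mulA: "xcomp k (mulA u v) = (\<lambda>w. \<Sum>i\<le>k. mulA (xcomp i u) (xcomp (k - i) v) w)"
proof
  fix w
  have "(\<Sum>i\<le>k. mulA (xcomp i u) (xcomp (k - i) v) w)
      = (\<Sum>i\<le>k. \<Sum>n\<in>{0..length w}. u (take n w) * v (drop n w) *
            (if xc (take n w) = i \<and> xc (drop n w) = k - i then 1 else 0))"
    unfolding mulA_def xcomp_def by (intro sum.cong refl) auto
  also have "\<dots> = (\<Sum>n\<in>{0..length w}. \<Sum>i\<le>k. u (take n w) * v (drop n w) *
            (if xc (take n w) = i \<and> xc (drop n w) = k - i then 1 else 0))"
    by (rule sum.swap)
  also have "\<dots> = (\<Sum>n\<in>{0..length w}. u (take n w) * v (drop n w) * (if xc w = k then 1 else 0))"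
    by (simp only: sum_distrib_left[symmetric] sum_ind_split)
  also have "\<dots> = xcomp k (mulA u v) w"
    unfolding xcomp_def mulA_def by (simp add: sum_distrib_right)
  finally show "xcomp k (mulA u v) w = (\<Sum>i\<le>k. mulA (xcomp i u) (xcomp (k - i) v) w)" by simp
qed

lemma comp_brA: "xcomp k (brA u v) = (\<lambda>w. \<Sum>i\<le>k. brA (xcomp i u) (xcomp (k - i) v) w)"
proof
  fix w
  have r: "(\<Sum>i\<le>k. mulA (xcomp (k - i) v) (xcomp i u) w) = (\<Sum>i\<le>k. mulA (xcomp i v) (xcomp (k - i) u) w)"
    by (rule sum.reindex_bij_witness[of _ "\<lambda>i. k - i" "\<lambda>i. k - i"]) auto
  have "xcomp k (brA u v) w = xcomp k (mulA u v) w - xcomp k (mulA v u) w"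
    by (simp add: brA_def xcomp_def subA_def)
  also have "\<dots> = (\<Sum>i\<le>k. mulA (xcomp i u) (xcomp (k - i) v) w) - (\<Sum>i\<le>k. mulA (xcomp i v) (xcomp (k - i) u) w)"
    by (simp only: comp_mulA)
  also have "\<dots> = (\<Sum>i\<le>k. brA (xcomp i u) (xcomp (k - i) v) w)"
    unfolding r[symmetric] brA_def subA_def by (simp add: sum_subtractf)
  finally show "xcomp k (brA u v) w = (\<Sum>i\<le>k. brA (xcomp i u) (xcomp (k - i) v) w)" .
qed

lemma comp_gx: "xcomp k (genA LX) = (if k = 1 then genA LX else zeroA)"
  unfolding xcomp_def genA_def zeroA_def by (rule ext) auto

lemma comp_gy: "xcomp k (genA LY) = (if k = 0 then genA LY else zeroA)"
  unfolding xcomp_def genA_def zeroA_def by (rule ext) auto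

lemma EV_gx: "EV (genA LX) t = 1"
  by (simp add: genA_dl EV_dl)

lemma EV_gy: "EV (genA LY) t = t 0"
  by (simp add: genA_dl EV_dl)

lemma xhomog_gx: "xhomog 1 (genA LX)"
  by (simp add: xhomog_def genA_def)

lemma xhomog_gy: "xhomog 0 (genA LY)"
  by (simp add: xhomog_def genA_def)


definition TI :: "ncpoly \<Rightarrow> bool" where
  "TI u \<longleftrightarrow> (\<forall>t s. EV u (\<lambda>m. t m + s) = EV u t)"

definition ASk :: "nat \<Rightarrow> ncpoly \<Rightarrow> bool" where
  "ASk k u \<longleftrightarrow> (\<forall>t. EV u (\<lambda>m. - t (k - m)) = - ((-1) ^ k) * EV u t)"

definition LieP :: "ncpoly \<Rightarrow> bool" where
  "LieP u \<longleftrightarrow> u \<in> Afin \<and> (\<exists>\<alpha>. \<forall>t. EV (xcomp 0 u) t = \<alpha> * t 0)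
     \<and> (\<forall>k. 0 < k \<longrightarrow> TI (xcomp k u)) \<and> (\<forall>k. ASk k (xcomp k u)) \<and> Dx (xcomp 3 u) = zeroA"

lemma sh_plus: "sh i (\<lambda>m. t m + s) = (\<lambda>m. sh i t m + s)"
  by (simp add: sh_def)

lemma sh_0: "sh 0 t = t"
  by (simp add: sh_def)

lemma L_mul_TI:
  assumes "A \<in> Afin" "B \<in> Afin" "xhomog i A" "TI A" "TI B"
  shows "TI (mulA A B)"
  unfolding TI_def
proof (intro allI)
  fix t :: "nat \<Rightarrow> real" and s :: real
  show "EV (mulA A B) (\<lambda>m. t m + s) = EV (mulA A B) t"
    using assms by (simp add: EV_mul sh_plus TI_def)
qed

lemma L_mul_AS:
  assumes "A \<in> Afin" "B \<in> Afin" "xhomog i A" "xhomog j B" "ASk i A" "ASk j B"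
  shows "EV (mulA A B) (\<lambda>m. - t (i + j - m)) = (-1) ^ (i + j) * EV (mulA B A) t"
proof -
  have e1: "EV A (\<lambda>m. - t (i + j - m)) = EV A (\<lambda>m. - (sh j t) (i - m))"
    by (rule EV_cong[OF assms(3)]) (simp add: sh_def)
  have e2: "EV B (sh i (\<lambda>m. - t (i + j - m))) = EV B (\<lambda>m. - t (j - m))"
    by (rule EV_cong[OF assms(4)]) (simp add: sh_def)
  have "EV (mulA A B) (\<lambda>m. - t (i + j - m)) = EV A (\<lambda>m. - (sh j t) (i - m)) * EV B (\<lambda>m. - t (j - m))"
    using EV_mul[OF assms(1,2,3)] e1 e2 by simp
  also have "\<dots> = (- ((-1) ^ i) * EV A (sh j t)) * (- ((-1) ^ j) * EV B t)"
    using assms(5,6) by (simp add: ASk_def)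
  also have "\<dots> = (-1) ^ (i + j) * (EV B t * EV A (sh j t))"
    by (simp add: power_add)
  also have "\<dots> = (-1) ^ (i + j) * EV (mulA B A) t"
    using EV_mul[OF assms(2,1,4)] by simp
  finally show ?thesis .
qed

lemma LieP_gx: "LieP (genA LX)"
  unfolding LieP_def
proof (intro conjI allI impI)
  show "genA LX \<in> Afin" by (simp add: genA_dl Afin_dl)
  show "\<exists>\<alpha>. \<forall>t. EV (xcomp 0 (genA LX)) t = \<alpha> * t 0"
    by (rule exI[of _ 0]) (simp add: comp_gx EV_zero)
  fix k
  show "0 < k \<Longrightarrow> TI (xcomp k (genA LX))"
    by (simp add: comp_gx TI_def EV_gx EV_zero)
  show "ASk k (xcomp k (genA LX))"
    by (simp add: comp_gx ASk_def EV_gx EV_zero)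
next
  show "Dx (xcomp 3 (genA LX)) = zeroA" by (simp add: comp_gx Dx_zero)
qed

lemma LieP_gy: "LieP (genA LY)"
  unfolding LieP_def
proof (intro conjI allI impI)
  show "genA LY \<in> Afin" by (simp add: genA_dl Afin_dl)
  show "\<exists>\<alpha>. \<forall>t. EV (xcomp 0 (genA LY)) t = \<alpha> * t 0"
    by (rule exI[of _ 1]) (simp add: comp_gy EV_gy)
  fix k
  show "0 < k \<Longrightarrow> TI (xcomp k (genA LY))"
    by (simp add: comp_gy TI_def EV_gy EV_zero)
  show "ASk k (xcomp k (genA LY))"
    by (simp add: comp_gy ASk_def EV_gy EV_zero)
next
  show "Dx (xcomp 3 (genA LY)) = zeroA" by (simp add: comp_gy Dx_zero)
qed

lemma LieP_zero: "LieP zeroA"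
  unfolding LieP_def
  by (simp add: comp_zero TI_def ASk_def EV_zero Dx_zero Afin_zero)

lemma LieP_add: "LieP f \<Longrightarrow> LieP g \<Longrightarrow> LieP (addA f g)"
  unfolding LieP_def
proof (elim conjE exE, intro conjI allI impI)
  fix \<alpha> \<beta>
  assume f: "f \<in> Afin" "\<forall>t. EV (xcomp 0 f) t = \<alpha> * t 0" "\<forall>k. 0 < k \<longrightarrow> TI (xcomp k f)"
      "\<forall>k. ASk k (xcomp k f)" "Dx (xcomp 3 f) = zeroA"
    and g: "g \<in> Afin" "\<forall>t. EV (xcomp 0 g) t = \<beta> * t 0" "\<forall>k. 0 < k \<longrightarrow> TI (xcomp k g)"
      "\<forall>k. ASk k (xcomp k g)" "Dx (xcomp 3 g) = zeroA"
  show "addA f g \<in> Afin" using f g by auto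
  show "\<exists>\<alpha>. \<forall>t. EV (xcomp 0 (addA f g)) t = \<alpha> * t 0"
    by (rule exI[of _ "\<alpha> + \<beta>"]) (use f g in \<open>simp add: comp_add EV_add comp_Afin distrib_right\<close>)
  fix k
  show "0 < k \<Longrightarrow> TI (xcomp k (addA f g))"
    using f g by (simp add: comp_add EV_add comp_Afin TI_def)
  show "ASk k (xcomp k (addA f g))"
    using f g by (simp add: comp_add EV_add comp_Afin ASk_def distrib_left)
next
  fix \<alpha> \<beta>
  assume "Dx (xcomp 3 f) = zeroA" "Dx (xcomp 3 g) = zeroA"
  then show "Dx (xcomp 3 (addA f g)) = zeroA"
    unfolding comp_add Dx_add by (simp add: addA_def zeroA_def)
qed

lemma LieP_smul: "LieP f \<Longrightarrow> LieP (smulA c f)"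
  unfolding LieP_def
proof (elim conjE exE, intro conjI allI impI)
  fix \<alpha>
  assume f: "f \<in> Afin" "\<forall>t. EV (xcomp 0 f) t = \<alpha> * t 0" "\<forall>k. 0 < k \<longrightarrow> TI (xcomp k f)"
      "\<forall>k. ASk k (xcomp k f)" "Dx (xcomp 3 f) = zeroA"
  show "smulA c f \<in> Afin" using f by auto
  show "\<exists>\<alpha>. \<forall>t. EV (xcomp 0 (smulA c f)) t = \<alpha> * t 0"
    by (rule exI[of _ "c * \<alpha>"]) (use f in \<open>simp add: comp_smul EV_smul\<close>)
  fix k
  show "0 < k \<Longrightarrow> TI (xcomp k (smulA c f))"
    using f by (simp add: comp_smul EV_smul TI_def)
  show "ASk k (xcomp k (smulA c f))"
    using f by (simp add: comp_smul EV_smul ASk_def)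
next
  fix \<alpha>
  assume "Dx (xcomp 3 f) = zeroA"
  then show "Dx (xcomp 3 (smulA c f)) = zeroA"
    unfolding comp_smul Dx_smul by (simp add: smulA_def zeroA_def)
qed

lemma EV_comp_brA:
  assumes "a \<in> Afin" "b \<in> Afin"
  shows "EV (xcomp k (brA a b)) t = (\<Sum>i\<le>k. EV (mulA (xcomp i a) (xcomp (k - i) b)) t - EV (mulA (xcomp (k - i) b) (xcomp i a)) t)"
proof -
  have "EV (xcomp k (brA a b)) t = (\<Sum>i\<le>k. EV (brA (xcomp i a) (xcomp (k - i) b)) t)"
    unfolding comp_brA by (rule EV_sum) (use assms in \<open>auto intro!: Afin_br comp_Afin\<close>)
  also have "\<dots> = (\<Sum>i\<le>k. EV (mulA (xcomp i a) (xcomp (k - i) b)) t - EV (mulA (xcomp (k - i) b) (xcomp i a)) t)"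
    unfolding brA_def by (rule sum.cong[OF refl], rule EV_sub) (use assms in \<open>auto intro!: Afin_mul comp_Afin\<close>)
  finally show ?thesis .
qed

lemma LieP_br:
  assumes "LieP a" "LieP b"
  shows "LieP (brA a b)"
proof -
  from assms obtain \<alpha> \<beta> where
    a: "a \<in> Afin" "\<And>t. EV (xcomp 0 a) t = \<alpha> * t 0" "\<And>k. 0 < k \<Longrightarrow> TI (xcomp k a)"
      "\<And>k. ASk k (xcomp k a)" "Dx (xcomp 3 a) = zeroA"
    and b: "b \<in> Afin" "\<And>t. EV (xcomp 0 b) t = \<beta> * t 0" "\<And>k. 0 < k \<Longrightarrow> TI (xcomp k b)"
      "\<And>k. ASk k (xcomp k b)" "Dx (xcomp 3 b) = zeroA"
    unfolding LieP_def by blast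
  have ca: "xcomp i a \<in> Afin" "xhomog i (xcomp i a)" for i using a(1) by (auto simp: xhomog_comp)
  have cb: "xcomp i b \<in> Afin" "xhomog i (xcomp i b)" for i using b(1) by (auto simp: xhomog_comp)
  have c0: "EV (xcomp 0 (brA a b)) t = 0" for t
  proof -
    have "EV (xcomp 0 (brA a b)) t = EV (mulA (xcomp 0 a) (xcomp 0 b)) t - EV (mulA (xcomp 0 b) (xcomp 0 a)) t"
      unfolding EV_comp_brA[OF a(1) b(1)] by simp
    also have "\<dots> = 0"
      unfolding EV_mul[OF ca(1)[of 0] cb(1)[of 0] ca(2)[of 0]] EV_mul[OF cb(1)[of 0] ca(1)[of 0] cb(2)[of 0]]
      by (simp add: a(2) b(2) sh_0)
    finally show ?thesis .
  qed
  have ti: "TI (xcomp k (brA a b))" if k: "0 < k" for k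
    unfolding TI_def
  proof (intro allI)
    fix t :: "nat \<Rightarrow> real" and s :: real
    have trm: "EV (mulA (xcomp i a) (xcomp (k - i) b)) (\<lambda>m. t m + s) - EV (mulA (xcomp (k - i) b) (xcomp i a)) (\<lambda>m. t m + s)
        = EV (mulA (xcomp i a) (xcomp (k - i) b)) t - EV (mulA (xcomp (k - i) b) (xcomp i a)) t"
      if i: "i \<le> k" for i
    proof (cases "i = 0")
      case True
      have tb: "TI (xcomp k b)" using b(3) k by simp
      have m1: "EV (mulA (xcomp 0 a) (xcomp k b)) T = \<alpha> * T 0 * EV (xcomp k b) T" for T
        unfolding EV_mul[OF ca(1) cb(1) ca(2)[of 0]] by (simp add: a(2) sh_0)
      have m2: "EV (mulA (xcomp k b) (xcomp 0 a)) T = EV (xcomp k b) T * (\<alpha> * T k)" for T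
        unfolding EV_mul[OF cb(1) ca(1) cb(2)[of k]] by (simp add: a(2) sh_def)
      show ?thesis using True tb unfolding TI_def by (simp add: m1 m2 algebra_simps)
    next
      case i0: False
      show ?thesis
      proof (cases "i = k")
        case True
        have ta: "TI (xcomp k a)" using a(3) k by simp
        have m1: "EV (mulA (xcomp k a) (xcomp 0 b)) T = EV (xcomp k a) T * (\<beta> * T k)" for T
          unfolding EV_mul[OF ca(1) cb(1) ca(2)[of k]] by (simp add: b(2) sh_def)
        have m2: "EV (mulA (xcomp 0 b) (xcomp k a)) T = \<beta> * T 0 * EV (xcomp k a) T" for T
          unfolding EV_mul[OF cb(1) ca(1) cb(2)[of 0]] by (simp add: b(2) sh_0)
        show ?thesis using True ta unfolding TI_def by (simp add: m1 m2 algebra_simps)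
      next
        case False
        then have "TI (xcomp i a)" "TI (xcomp (k - i) b)" using a(3) b(3) i i0 by auto
        then have "TI (mulA (xcomp i a) (xcomp (k - i) b))" "TI (mulA (xcomp (k - i) b) (xcomp i a))"
          using L_mul_TI[OF ca(1) cb(1) ca(2)] L_mul_TI[OF cb(1) ca(1) cb(2)] by auto
        then show ?thesis by (simp add: TI_def)
      qed
    qed
    show "EV (xcomp k (brA a b)) (\<lambda>m. t m + s) = EV (xcomp k (brA a b)) t"
      unfolding EV_comp_brA[OF a(1) b(1)] by (rule sum.cong[OF refl]) (simp add: trm)
  qed
  have as: "ASk k (xcomp k (brA a b))" for k
    unfolding ASk_def
  proof (intro allI)
    fix t :: "nat \<Rightarrow> real"
    have trm: "EV (mulA (xcomp i a) (xcomp (k - i) b)) (\<lambda>m. - t (k - m)) - EV (mulA (xcomp (k - i) b) (xcomp i a)) (\<lambda>m. - t (k - m))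
        = - ((-1) ^ k) * (EV (mulA (xcomp i a) (xcomp (k - i) b)) t - EV (mulA (xcomp (k - i) b) (xcomp i a)) t)"
      if i: "i \<le> k" for i
    proof -
      have e1: "EV (mulA (xcomp i a) (xcomp (k - i) b)) (\<lambda>m. - t (k - m)) = (-1) ^ k * EV (mulA (xcomp (k - i) b) (xcomp i a)) t"
        using L_mul_AS[OF ca(1)[of i] cb(1)[of "k-i"] ca(2)[of i] cb(2)[of "k-i"] a(4)[of i] b(4)[of "k-i"], where t=t] i by simp
      have e2: "EV (mulA (xcomp (k - i) b) (xcomp i a)) (\<lambda>m. - t (k - m)) = (-1) ^ k * EV (mulA (xcomp i a) (xcomp (k - i) b)) t"
        using L_mul_AS[OF cb(1)[of "k-i"] ca(1)[of i] cb(2)[of "k-i"] ca(2)[of i] b(4)[of "k-i"] a(4)[of i], where t=t] i by simp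
      show ?thesis unfolding e1 e2 by (simp add: algebra_simps)
    qed
    show "EV (xcomp k (brA a b)) (\<lambda>m. - t (k - m)) = - ((-1) ^ k) * EV (xcomp k (brA a b)) t"
      unfolding EV_comp_brA[OF a(1) b(1)] sum_distrib_left by (rule sum.cong[OF refl]) (simp add: trm)
  qed
  have dx: "Dx (xcomp 3 (brA a b)) = zeroA"
    unfolding comp_brA Dx_sum using ca cb by (simp add: Dx_br zeroA_def)
  show ?thesis unfolding LieP_def
    using a(1) b(1) c0 ti as dx by (auto intro!: exI[of _ 0])
qed

lemma freeLie_LieP: "f \<in> freeLie \<Longrightarrow> LieP f"
  by (induction rule: freeLie.induct) (auto intro: LieP_gx LieP_gy LieP_zero LieP_add LieP_smul LieP_br)


definition Good2 :: "ncpoly \<Rightarrow> bool" where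
  "Good2 v \<longleftrightarrow> v \<in> Afin \<and> xhomog 2 v \<and> TI v \<and> ASk 2 v"

lemma sum3: fixes f :: "nat \<Rightarrow> 'a::comm_monoid_add" shows "(\<Sum>j<3. f j) = f 0 + f 1 + (f 2 :: 'a::comm_monoid_add)"
  by (simp add: numeral_3_eq_3 numeral_2_eq_2 add_ac)

lemma sum_le3: fixes f :: "nat \<Rightarrow> 'a::comm_monoid_add" shows "(\<Sum>i\<le>3. f i) = f 0 + f 1 + f 2 + (f 3 :: 'a::comm_monoid_add)"
  by (simp add: numeral_3_eq_3 numeral_2_eq_2 add_ac)

lemma tau_plus: "tau j (\<lambda>m. t m + s) = (\<lambda>m. tau j t m + s)"
  by (simp add: tau_def)

lemma tau_R:
  assumes "j < 3" "m \<le> 3"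
  shows "tau j (\<lambda>m. - t (2 - m)) m = - tau (2 - j) t (3 - m)"
proof -
  have "j = 0 \<or> j = 1 \<or> j = 2" using assms(1) by auto
  moreover have "m = 0 \<or> m = 1 \<or> m = 2 \<or> m = 3" using assms(2) by auto
  ultimately show ?thesis by (auto simp: tau_def numeral_2_eq_2)
qed

lemma Dx_mul_AS:
  assumes "A \<in> Afin" "B \<in> Afin" "xhomog i A" "xhomog j B" "ASk i A" "ASk j B" "i + j = 3"
  shows "EV (Dx (mulA A B)) (\<lambda>m. - t (2 - m)) = - EV (Dx (mulA B A)) t"
proof -
  have h: "xhomog 3 (mulA A B)" "xhomog 3 (mulA B A)"
    using xhomog_mulA[OF assms(3,4)] xhomog_mulA[OF assms(4,3)] assms(7) by (auto simp: add.commute)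
  have m: "mulA A B \<in> Afin" "mulA B A \<in> Afin" using assms by auto
  have e: "EV (mulA A B) (tau k (\<lambda>m. - t (2 - m))) = - EV (mulA B A) (tau (2 - k) t)" if "k < 3" for k
  proof -
    have "EV (mulA A B) (tau k (\<lambda>m. - t (2 - m))) = EV (mulA A B) (\<lambda>m. - tau (2 - k) t (i + j - m))"
      by (rule EV_cong[OF h(1)]) (use that assms(7) tau_R in auto)
    also have "\<dots> = (-1) ^ (i + j) * EV (mulA B A) (tau (2 - k) t)"
      by (rule L_mul_AS[OF assms(1-6)])
    finally show ?thesis using assms(7) by simp
  qed
  have "EV (Dx (mulA A B)) (\<lambda>m. - t (2 - m)) = (\<Sum>k<3. EV (mulA A B) (tau k (\<lambda>m. - t (2 - m))))"
    by (rule EV_Dx[OF m(1) h(1)])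
  also have "\<dots> = (\<Sum>k<3. - EV (mulA B A) (tau (2 - k) t))"
    by (rule sum.cong[OF refl]) (simp add: e)
  also have "\<dots> = - (\<Sum>k<3. EV (mulA B A) (tau k t))"
    by (simp add: sum3)
  also have "\<dots> = - EV (Dx (mulA B A)) t"
    by (simp add: EV_Dx[OF m(2) h(2)])
  finally show ?thesis .
qed

lemma Dx_mul_TI:
  assumes "LieP a" "LieP b" "i \<le> 3"
  shows "TI (Dx (mulA (xcomp i a) (xcomp (3 - i) b)))"
proof -
  from assms obtain \<alpha> \<beta> where
    a: "a \<in> Afin" "\<And>t. EV (xcomp 0 a) t = \<alpha> * t 0" "\<And>k. 0 < k \<Longrightarrow> TI (xcomp k a)"
      "Dx (xcomp 3 a) = zeroA"
    and b: "b \<in> Afin" "\<And>t. EV (xcomp 0 b) t = \<beta> * t 0" "\<And>k. 0 < k \<Longrightarrow> TI (xcomp k b)"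
      "Dx (xcomp 3 b) = zeroA"
    unfolding LieP_def by blast
  have ca: "xcomp k a \<in> Afin" "xhomog k (xcomp k a)" for k using a(1) by (auto simp: xhomog_comp)
  have cb: "xcomp k b \<in> Afin" "xhomog k (xcomp k b)" for k using b(1) by (auto simp: xhomog_comp)
  let ?A = "xcomp i a" and ?B = "xcomp (3 - i) b"
  have h: "xhomog 3 (mulA ?A ?B)" using xhomog_mulA[OF ca(2)[of i] cb(2)[of "3-i"]] assms(3) by simp
  have m: "mulA ?A ?B \<in> Afin" using ca cb by auto
  have ev: "EV (Dx (mulA ?A ?B)) t = (\<Sum>j<3. EV (mulA ?A ?B) (tau j t))" for t
    by (rule EV_Dx[OF m h])
  show ?thesis
    unfolding TI_def ev tau_plus
  proof (intro allI)
    fix t :: "nat \<Rightarrow> real" and s :: real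
    show "(\<Sum>j<3. EV (mulA ?A ?B) (\<lambda>m. tau j t m + s)) = (\<Sum>j<3. EV (mulA ?A ?B) (tau j t))"
    proof (cases "i = 0")
      case True
      have tb: "TI (xcomp 3 b)" using b(3) by simp
      have z: "(\<Sum>j<3. EV (xcomp 3 b) (tau j t)) = 0"
        using EV_Dx[OF cb(1) cb(2), of t] b(4) by (simp add: EV_zero)
      have m1: "EV (mulA ?A ?B) T = \<alpha> * T 0 * EV (xcomp 3 b) T" for T
        unfolding EV_mul[OF ca(1) cb(1) ca(2)] using True by (simp add: a(2) sh_0)
      have "(\<Sum>j<3. EV (mulA ?A ?B) (\<lambda>m. tau j t m + s))
          = (\<Sum>j<3. EV (mulA ?A ?B) (tau j t)) + \<alpha> * s * (\<Sum>j<3. EV (xcomp 3 b) (tau j t))"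
        using tb unfolding m1 TI_def by (simp add: sum.distrib sum_distrib_left algebra_simps)
      then show ?thesis using z by simp
    next
      case i0: False
      show ?thesis
      proof (cases "i = 3")
        case True
        have ta: "TI (xcomp 3 a)" using a(3) by simp
        have z: "(\<Sum>j<3. EV (xcomp 3 a) (tau j t)) = 0"
          using EV_Dx[OF ca(1) ca(2), of t] a(4) by (simp add: EV_zero)
        have m1: "EV (mulA ?A ?B) T = EV (xcomp 3 a) T * (\<beta> * T 3)" for T
          unfolding EV_mul[OF ca(1) cb(1) ca(2)] using True by (simp add: b(2) sh_def)
        have "(\<Sum>j<3. EV (mulA ?A ?B) (\<lambda>m. tau j t m + s))
            = (\<Sum>j<3. EV (mulA ?A ?B) (tau j t)) + \<beta> * s * (\<Sum>j<3. EV (xcomp 3 a) (tau j t))"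
          using ta unfolding m1 TI_def by (simp add: sum.distrib sum_distrib_left algebra_simps)
        then show ?thesis using z by simp
      next
        case False
        then have "TI ?A" "TI ?B" using a(3) b(3) i0 assms(3) by auto
        then have "TI (mulA ?A ?B)" using L_mul_TI[OF ca(1) cb(1) ca(2)] by blast
        then show ?thesis unfolding TI_def by simp
      qed
    qed
  qed
qed

lemma EV_c2Dx:
  assumes "a \<in> Afin" "b \<in> Afin"
  shows "EV (xcomp 2 (Dx (mulA a b))) t = (\<Sum>i\<le>3. EV (Dx (mulA (xcomp i a) (xcomp (3 - i) b))) t)"
proof -
  have "xcomp 2 (Dx (mulA a b)) = Dx (xcomp 3 (mulA a b))"
    using comp_Dx[of 2 "mulA a b"] by simp
  also have "\<dots> = (\<lambda>u. \<Sum>i\<le>3. Dx (mulA (xcomp i a) (xcomp (3 - i) b)) u)"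
    unfolding comp_mulA Dx_sum ..
  finally have "xcomp 2 (Dx (mulA a b)) = (\<lambda>u. \<Sum>i\<le>3. Dx (mulA (xcomp i a) (xcomp (3 - i) b)) u)" .
  then show ?thesis
    by (simp only:) (rule EV_sum, simp, use assms in \<open>auto intro!: Afin_Dx Afin_mul comp_Afin\<close>)
qed

lemma Good2_prod:
  assumes "LieP a" "LieP b"
  shows "Good2 (xcomp 2 (Dx (mulA a b)))"
proof -
  have a: "a \<in> Afin" "\<And>k. ASk k (xcomp k a)" and b: "b \<in> Afin" "\<And>k. ASk k (xcomp k b)"
    using assms unfolding LieP_def by blast+
  have ca: "xcomp k a \<in> Afin" "xhomog k (xcomp k a)" for k using a(1) by (auto simp: xhomog_comp)
  have cb: "xcomp k b \<in> Afin" "xhomog k (xcomp k b)" for k using b(1) by (auto simp: xhomog_comp)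
  have fin: "xcomp 2 (Dx (mulA a b)) \<in> Afin" using a b by (auto intro!: Afin_Dx)
  have ti: "TI (xcomp 2 (Dx (mulA a b)))"
    unfolding TI_def EV_c2Dx[OF a(1) b(1)]
    using Dx_mul_TI[OF assms] unfolding TI_def by simp
  have as: "ASk 2 (xcomp 2 (Dx (mulA a b)))"
    unfolding ASk_def
  proof
    fix t :: "nat \<Rightarrow> real"
    have e: "EV (Dx (mulA (xcomp i a) (xcomp (3 - i) b))) (\<lambda>m. - t (2 - m)) = - EV (Dx (mulA (xcomp (3 - i) b) (xcomp i a))) t"
      if "i \<le> 3" for i
      by (rule Dx_mul_AS[OF ca(1) cb(1) ca(2) cb(2) a(2) b(2)]) (use that in simp)
    have "EV (xcomp 2 (Dx (mulA a b))) (\<lambda>m. - t (2 - m)) = - (\<Sum>i\<le>3. EV (Dx (mulA (xcomp (3 - i) b) (xcomp i a))) t)"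
      unfolding EV_c2Dx[OF a(1) b(1)] by (simp add: e sum_negf)
    also have "\<dots> = - EV (xcomp 2 (Dx (mulA b a))) t"
      unfolding EV_c2Dx[OF b(1) a(1)] by (simp add: sum_le3 add_ac)
    also have "\<dots> = - EV (xcomp 2 (Dx (mulA a b))) t"
      by (simp add: Dx_mul_swap[OF a(1) b(1)])
    finally show "EV (xcomp 2 (Dx (mulA a b))) (\<lambda>m. - t (2 - m)) = - ((-1) ^ 2) * EV (xcomp 2 (Dx (mulA a b))) t"
      by simp
  qed
  show ?thesis unfolding Good2_def using fin ti as by (simp add: xhomog_comp)
qed

lemma Good2_zero: "Good2 zeroA"
  by (simp add: Good2_def TI_def ASk_def EV_zero[unfolded zeroA_def] xhomog_def zeroA_def Afin_zero[unfolded zeroA_def])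

lemma Good2_add: "Good2 f \<Longrightarrow> Good2 g \<Longrightarrow> Good2 (addA f g)"
  unfolding Good2_def TI_def ASk_def
  by (auto simp: EV_add xhomog_def, auto simp: addA_def, metis add.right_neutral)

lemma Good2_smul: "Good2 f \<Longrightarrow> Good2 (smulA c f)"
  unfolding Good2_def TI_def ASk_def
  by (auto simp: EV_smul xhomog_def, auto simp: smulA_def)

lemma Good2_lspan:
  assumes "g \<in> lspan {mulA a b | a b. a \<in> freeLie \<and> b \<in> freeLie}"
  shows "Good2 (xcomp 2 (Dx g))"
  using assms
proof (induction rule: lspan.induct)
  case lspan_zero
  then show ?case by (simp add: Dx_zero comp_zero Good2_zero)
next
  case (lspan_base s)
  then show ?case using Good2_prod freeLie_LieP by blast
next
  case (lspan_add f g)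
  then show ?case by (simp add: Dx_add comp_add Good2_add)
next
  case (lspan_smul f c)
  then show ?case by (simp add: Dx_smul comp_smul Good2_smul)
qed


section \<open>identity theorem\<close>

lemma poly1_ident:
  fixes c :: "nat \<Rightarrow> real"
  assumes "finite N" "\<And>z. (\<Sum>n\<in>N. c n * z ^ n) = 0" "n \<in> N"
  shows "c n = 0"
proof -
  define p where "p = (\<Sum>m\<in>N. monom (c m) m)"
  have "\<forall>z. poly p z = 0" unfolding p_def poly_sum poly_monom using assms(2) by simp
  then have "p = 0" by (simp add: poly_all_0_iff_0)
  then have "coeff p n = 0" by simp
  moreover have "coeff p n = c n"
    unfolding p_def coeff_sum coeff_monom using assms(1,3) by (simp add: sum.delta)
  ultimately show ?thesis by simp
qed

fun splitx :: "letter list \<Rightarrow> nat \<times> letter list" where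
  "splitx [] = (0, [])"
| "splitx (LX # w) = (0, w)"
| "splitx (LY # w) = (Suc (fst (splitx w)), snd (splitx w))"

lemma splitx_eq: "0 < xc w \<Longrightarrow> w = replicate (fst (splitx w)) LY @ LX # snd (splitx w)"
proof (induction w)
  case Nil
  then show ?case by simp
next
  case (Cons c w)
  then show ?case by (cases c) auto
qed

lemma splitx_rep: "splitx (replicate n LY @ LX # v) = (n, v)"
  by (induction n) auto

lemma xc0_rep: "xc w = 0 \<Longrightarrow> w = replicate (length w) LY"
proof (induction w)
  case Nil
  then show ?case by simp
next
  case (Cons c w)
  then show ?case by (cases c) auto
qed

lemma mon_rep: "mon t (replicate n LY) = t 0 ^ n"
  using mon_replicate_y[of t n "[]"] by simp

lemma mon_split: "mon t (replicate n LY @ LX # v) = t 0 ^ n * mon (sh 1 t) v"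
  by (simp add: mon_replicate_y sh_def)

lemma spt_zero: "spt f = {} \<Longrightarrow> f = zeroA"
  by (rule ext) (auto simp: spt_def zeroA_def)

lemma ident:
  assumes "f \<in> Afin" "xhomog k f" "\<And>t. EV f t = 0"
  shows "f = zeroA"
  using assms
proof (induction k arbitrary: f)
  case 0
  have fin: "finite (spt f)" using 0 by (simp add: Afin_spt)
  have rep: "w = replicate (length w) LY" if "w \<in> spt f" for w
    using that 0(2) xc0_rep by (auto simp: spt_def xhomog_def)
  have inj: "inj_on length (spt f)" by (rule inj_onI) (metis rep)
  have "(\<Sum>n\<in>length ` spt f. f (replicate n LY) * z ^ n) = 0" for z
  proof -
    have "(\<Sum>n\<in>length ` spt f. f (replicate n LY) * z ^ n) = (\<Sum>w\<in>spt f. f (replicate (length w) LY) * z ^ length w)"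
      by (rule sum.reindex[OF inj, unfolded comp_def])
    also have "\<dots> = (\<Sum>w\<in>spt f. f w * mon (\<lambda>_. z) w)"
      by (rule sum.cong[OF refl]) (metis mon_rep rep)
    also have "\<dots> = EV f (\<lambda>_. z)" by (simp add: EV_def)
    finally show ?thesis using 0(3) by simp
  qed
  then have "f (replicate n LY) = 0" if "n \<in> length ` spt f" for n
    using poly1_ident[of "length ` spt f" "\<lambda>n. f (replicate n LY)" n] fin that by blast
  then have "spt f = {}"
  proof -
    assume z: "\<And>n. n \<in> length ` spt f \<Longrightarrow> f (replicate n LY) = 0"
    show "spt f = {}"
    proof (rule ccontr)
      assume "spt f \<noteq> {}"
      then obtain w where w: "w \<in> spt f" by blast
      then have "f (replicate (length w) LY) = 0" using z by blast
      then have "f w = 0" using rep[OF w] by simp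
      then show False using w by (simp add: spt_def)
    qed
  qed
  then show ?case by (rule spt_zero)
next
  case (Suc k)
  have fin: "finite (spt f)" using Suc by (simp add: Afin_spt)
  define fn where "fn n = (\<lambda>v. f (replicate n LY @ LX # v))" for n
  have wpos: "0 < xc w" if "w \<in> spt f" for w using that Suc.prems(2) by (auto simp: spt_def xhomog_def)
  have fn_spt: "spt (fn n) \<subseteq> snd ` splitx ` {w \<in> spt f. fst (splitx w) = n}" for n
  proof
    fix v assume "v \<in> spt (fn n)"
    then have "replicate n LY @ LX # v \<in> {w \<in> spt f. fst (splitx w) = n}"
      by (simp add: fn_def spt_def splitx_rep)
    then show "v \<in> snd ` splitx ` {w \<in> spt f. fst (splitx w) = n}"
      by (rule rev_image_eqI[OF imageI]) (simp add: splitx_rep)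
  qed
  have fn_fin: "fn n \<in> Afin" for n
    unfolding Afin_spt by (rule finite_subset[OF fn_spt]) (use fin in simp)
  have fn_hom: "xhomog k (fn n)" for n
    using Suc.prems(2) by (auto simp: xhomog_def fn_def)
  have evf: "EV f t = (\<Sum>n\<in>(\<lambda>w. fst (splitx w)) ` spt f. t 0 ^ n * EV (fn n) (sh 1 t))" for t
  proof -
    have "EV f t = (\<Sum>w\<in>spt f. f w * mon t w)" by (simp add: EV_def)
    also have "\<dots> = (\<Sum>n\<in>(\<lambda>w. fst (splitx w)) ` spt f. \<Sum>w\<in>{w \<in> spt f. fst (splitx w) = n}. f w * mon t w)"
      by (rule sum.image_gen[OF fin])
    also have "\<dots> = (\<Sum>n\<in>(\<lambda>w. fst (splitx w)) ` spt f. t 0 ^ n * EV (fn n) (sh 1 t))"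
    proof (rule sum.cong[OF refl])
      fix n
      let ?W = "{w \<in> spt f. fst (splitx w) = n}"
      have injW: "inj_on (\<lambda>w. snd (splitx w)) ?W"
      proof (rule inj_onI)
        fix w w' assume "w \<in> ?W" "w' \<in> ?W" "snd (splitx w) = snd (splitx w')"
        then show "w = w'" using splitx_eq wpos by (metis (mono_tags, lifting) mem_Collect_eq)
      qed
      have "EV (fn n) (sh 1 t) = (\<Sum>v\<in>snd ` splitx ` ?W. fn n v * mon (sh 1 t) v)"
        by (rule EV_superset[OF _ fn_spt]) (use fin in simp)
      also have "\<dots> = (\<Sum>v\<in>(\<lambda>w. snd (splitx w)) ` ?W. fn n v * mon (sh 1 t) v)"
        by (simp add: image_image)
      also have "\<dots> = (\<Sum>w\<in>?W. fn n (snd (splitx w)) * mon (sh 1 t) (snd (splitx w)))"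
        by (rule sum.reindex[OF injW, unfolded comp_def])
      also have "\<dots> = (\<Sum>w\<in>?W. f w * mon (sh 1 t) (snd (splitx w)))"
      proof (rule sum.cong[OF refl])
        fix w assume "w \<in> ?W"
        then have "w = replicate n LY @ LX # snd (splitx w)" using splitx_eq wpos by auto
        then show "fn n (snd (splitx w)) * mon (sh 1 t) (snd (splitx w)) = f w * mon (sh 1 t) (snd (splitx w))"
          by (simp add: fn_def)
      qed
      finally have e: "EV (fn n) (sh 1 t) = (\<Sum>w\<in>?W. f w * mon (sh 1 t) (snd (splitx w)))" .
      have "(\<Sum>w\<in>?W. f w * mon t w) = (\<Sum>w\<in>?W. t 0 ^ n * (f w * mon (sh 1 t) (snd (splitx w))))"
      proof (rule sum.cong[OF refl])
        fix w assume "w \<in> ?W"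
        then have "w = replicate n LY @ LX # snd (splitx w)" using splitx_eq wpos by auto
        then have "mon t w = t 0 ^ n * mon (sh 1 t) (snd (splitx w))" by (metis mon_split)
        then show "f w * mon t w = t 0 ^ n * (f w * mon (sh 1 t) (snd (splitx w)))" by simp
      qed
      also have "\<dots> = t 0 ^ n * EV (fn n) (sh 1 t)" by (simp only: e sum_distrib_left)
      finally show "(\<Sum>w\<in>?W. f w * mon t w) = t 0 ^ n * EV (fn n) (sh 1 t)" .
    qed
    finally show ?thesis .
  qed
  have zero_all: "EV (fn n) t' = 0" for n t'
  proof (cases "n \<in> (\<lambda>w. fst (splitx w)) ` spt f")
    case True
    have "(\<Sum>n\<in>(\<lambda>w. fst (splitx w)) ` spt f. EV (fn n) t' * z ^ n) = 0" for z
    proof -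
      define t where "t = (\<lambda>m. if m = 0 then z else t' (m - 1))"
      have "sh 1 t = t'" by (simp add: t_def sh_def)
      then show ?thesis using evf[of t] Suc.prems(3)[of t] by (simp add: t_def mult.commute)
    qed
    then show ?thesis using poly1_ident[of _ "\<lambda>n. EV (fn n) t'" n] fin True by blast
  next
    case False
    have "spt (fn n) = {}"
    proof (rule ccontr)
      assume "spt (fn n) \<noteq> {}"
      then obtain v where "v \<in> spt (fn n)" by blast
      then have "replicate n LY @ LX # v \<in> spt f" by (simp add: fn_def spt_def)
      then have "n \<in> (\<lambda>w. fst (splitx w)) ` spt f" by (rule rev_image_eqI) (simp add: splitx_rep)
      then show False using False by simp
    qed
    then show ?thesis by (simp add: EV_def)
  qed
  have "fn n = zeroA" for n by (rule Suc.IH[OF fn_fin fn_hom zero_all])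
  then have "spt f = {}"
  proof -
    assume z: "\<And>n. fn n = zeroA"
    show "spt f = {}"
    proof (rule ccontr)
      assume "spt f \<noteq> {}"
      then obtain w where w: "w \<in> spt f" by blast
      then have "w = replicate (fst (splitx w)) LY @ LX # snd (splitx w)" using splitx_eq wpos by auto
      then have "f w = fn (fst (splitx w)) (snd (splitx w))" by (simp add: fn_def)
      then have "f w = 0" using z by (simp add: zeroA_def)
      then show False using w by (simp add: spt_def)
    qed
  qed
  then show ?case by (rule spt_zero)
qed

lemma ident_eq:
  assumes "f \<in> Afin" "g \<in> Afin" "xhomog k f" "xhomog k g" "\<And>t. EV f t = EV g t"
  shows "f = g"
proof -
  have h: "xhomog k (subA f g)"
    using assms(3,4) unfolding xhomog_def subA_def by (metis diff_zero diff_self)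
  have "subA f g = zeroA"
    by (rule ident[OF Afin_sub[OF assms(1,2)] h]) (simp add: EV_sub[OF assms(1,2)] assms(5))
  then show ?thesis by (simp add: subA_def zeroA_def fun_eq_iff)
qed


section \<open>ad_y powers and l_P\<close>

lemma ady_0: "ady 0 = genA LX" by (simp add: ady_def)
lemma ady_Suc: "ady (Suc i) = brA (genA LY) (ady i)" by (simp add: ady_def)

lemma xhomog_sub: "xhomog k f \<Longrightarrow> xhomog k g \<Longrightarrow> xhomog k (subA f g)"
  unfolding xhomog_def subA_def by (metis diff_zero diff_self)

lemma ady_props: "ady i \<in> freeLie \<and> ady i \<in> Afin \<and> xhomog 1 (ady i) \<and> (\<forall>t. EV (ady i) t = (t 0 - t 1) ^ i)"
proof (induction i)
  case 0
  show ?case unfolding ady_0 using fl_x freeLie_Afin[OF fl_x] xhomog_gx EV_gx by simp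
next
  case (Suc i)
  have yA: "genA LY \<in> Afin" by (simp add: genA_dl Afin_dl)
  have f: "ady i \<in> freeLie" "ady i \<in> Afin" "xhomog 1 (ady i)" "\<And>t. EV (ady i) t = (t 0 - t 1) ^ i"
    using Suc by auto
  have h: "xhomog 1 (brA (genA LY) (ady i))"
    unfolding brA_def using xhomog_mulA[OF xhomog_gy f(3)] xhomog_mulA[OF f(3) xhomog_gy]
    by (intro xhomog_sub) auto
  have e: "EV (brA (genA LY) (ady i)) t = (t 0 - t 1) ^ Suc i" for t
  proof -
    have "EV (brA (genA LY) (ady i)) t = EV (mulA (genA LY) (ady i)) t - EV (mulA (ady i) (genA LY)) t"
      unfolding brA_def by (rule EV_sub) (use yA f in auto)
    also have "\<dots> = t 0 * (t 0 - t 1) ^ i - (t 0 - t 1) ^ i * t 1"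
      by (simp add: EV_mul[OF yA f(2) xhomog_gy] EV_mul[OF f(2) yA f(3)] EV_gy f(4) sh_0 sh_def)
    finally show ?thesis by (simp add: algebra_simps)
  qed
  show ?case using f h e yA by (auto simp: ady_Suc intro: fl_br fl_y freeLie_Afin)
qed

lemma xhomog2_brady: "xhomog 2 (brA (ady i) (ady j))"
proof -
  have h: "xhomog 1 (ady k)" for k using ady_props by blast
  show ?thesis
    unfolding brA_def using xhomog_mulA[OF h[of i] h[of j], unfolded one_add_one] xhomog_mulA[OF h[of j] h[of i], unfolded one_add_one]
    by (intro xhomog_sub)
qed

lemma EV_brady: "EV (brA (ady i) (ady j)) t = (t 0 - t 1) ^ i * (t 1 - t 2) ^ j - (t 0 - t 1) ^ j * (t 1 - t 2) ^ i"
proof -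
  have p: "ady k \<in> Afin" "xhomog 1 (ady k)" "EV (ady k) T = (T 0 - T 1) ^ k" for k T
    using ady_props by auto
  show ?thesis
    unfolding brA_def EV_sub[OF Afin_mul[OF p(1) p(1)] Afin_mul[OF p(1) p(1)]]
      EV_mul[OF p(1) p(1) p(2)] by (simp add: p(3) sh_def numeral_2_eq_2)
qed

lemma lP_superset:
  assumes "finite S" "supp2 P \<subseteq> S"
  shows "lP P = (\<lambda>w. \<Sum>p\<in>S. P p * brA (ady (fst p)) (ady (snd p)) w)"
proof
  fix w
  have "lP P w = (\<Sum>p\<in>supp2 P. P p * brA (ady (fst p)) (ady (snd p)) w)"
    unfolding lP_def by (simp add: split_def)
  also have "\<dots> = (\<Sum>p\<in>S. P p * brA (ady (fst p)) (ady (snd p)) w)"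
    by (rule sum.mono_neutral_left) (use assms in \<open>auto simp: supp2_def\<close>)
  finally show "lP P w = (\<Sum>p\<in>S. P p * brA (ady (fst p)) (ady (snd p)) w)" .
qed

lemma peval_superset:
  assumes "finite S" "supp2 P \<subseteq> S"
  shows "peval P a b = (\<Sum>p\<in>S. P p * a ^ fst p * b ^ snd p)"
proof -
  have "peval P a b = (\<Sum>p\<in>supp2 P. P p * a ^ fst p * b ^ snd p)"
    unfolding peval_def by (simp add: split_def)
  also have "\<dots> = (\<Sum>p\<in>S. P p * a ^ fst p * b ^ snd p)"
    by (rule sum.mono_neutral_left) (use assms in \<open>auto simp: supp2_def\<close>)
  finally show ?thesis .
qed

lemma brady_Afin: "brA (ady i) (ady j) \<in> Afin"
  using ady_props by auto

lemma lP_freeLie: "P \<in> Poly2 \<Longrightarrow> lP P \<in> freeLie"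
proof -
  assume "P \<in> Poly2"
  then have fin: "finite (supp2 P)" by (simp add: Poly2_def)
  have "(\<lambda>w. P p * brA (ady (fst p)) (ady (snd p)) w) \<in> freeLie" for p
    using fl_smul[OF fl_br[OF ady_props[THEN conjunct1] ady_props[THEN conjunct1]], of "P p" "fst p" "snd p"]
    by (simp add: smulA_def)
  then show ?thesis unfolding lP_superset[OF fin order_refl] by (intro freeLie_sum fin)
qed

lemma lP_Afin: "P \<in> Poly2 \<Longrightarrow> lP P \<in> Afin"
  using lP_freeLie freeLie_Afin by blast

lemma lP_xhomog: "xhomog 2 (lP P)"
  unfolding xhomog_def lP_def
proof (intro allI impI)
  fix w assume "(\<Sum>(i, j)\<in>supp2 P. P (i, j) * brA (ady i) (ady j) w) \<noteq> 0"
  then obtain p where "(case p of (i, j) \<Rightarrow> P (i, j) * brA (ady i) (ady j) w) \<noteq> 0"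
    by (auto elim: sum.not_neutral_contains_not_neutral)
  then have "brA (ady (fst p)) (ady (snd p)) w \<noteq> 0" by (auto simp: split_def)
  then show "xc w = 2" using xhomog2_brady unfolding xhomog_def by blast
qed

lemma EV_lP:
  assumes "P \<in> Poly2"
  shows "EV (lP P) t = peval P (t 0 - t 1) (t 1 - t 2) - peval P (t 1 - t 2) (t 0 - t 1)"
proof -
  have fin: "finite (supp2 P)" using assms by (simp add: Poly2_def)
  have "EV (lP P) t = (\<Sum>p\<in>supp2 P. EV (\<lambda>w. P p * brA (ady (fst p)) (ady (snd p)) w) t)"
    unfolding lP_superset[OF fin order_refl] by (rule EV_sum[OF fin]) (auto intro: brady_Afin)
  also have "\<dots> = (\<Sum>p\<in>supp2 P. P p * (t 0 - t 1) ^ fst p * (t 1 - t 2) ^ snd p)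
                 - (\<Sum>p\<in>supp2 P. P p * (t 1 - t 2) ^ fst p * (t 0 - t 1) ^ snd p)"
    unfolding sum_subtractf[symmetric] by (rule sum.cong[OF refl]) (simp add: EV_pmul EV_brady algebra_simps)
  also have "\<dots> = peval P (t 0 - t 1) (t 1 - t 2) - peval P (t 1 - t 2) (t 0 - t 1)"
    using peval_superset[OF fin order_refl] by simp
  finally show ?thesis .
qed

lemma supp2_swap: "P \<in> AntiPoly \<Longrightarrow> prod.swap ` supp2 P = supp2 P"
proof -
  assume a: "P \<in> AntiPoly"
  have m: "prod.swap x \<in> supp2 P \<longleftrightarrow> x \<in> supp2 P" for x
  proof -
    have "P (snd x, fst x) = - P (fst x, snd x)" using a unfolding AntiPoly_def by blast
    then show ?thesis by (simp add: supp2_def prod.swap_def)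
  qed
  show ?thesis
  proof (intro set_eqI iffI)
    fix x assume "x \<in> prod.swap ` supp2 P"
    then obtain y where "y \<in> supp2 P" "x = prod.swap y" by blast
    then show "x \<in> supp2 P" using m by simp
  next
    fix x assume "x \<in> supp2 P"
    then have "prod.swap x \<in> supp2 P" using m by simp
    then show "x \<in> prod.swap ` supp2 P" by (rule rev_image_eqI) simp
  qed
qed

lemma peval_anti:
  assumes "P \<in> AntiPoly"
  shows "peval P b a = - peval P a b"
proof -
  have fin: "finite (supp2 P)" using assms unfolding AntiPoly_def Poly2_def by blast
  have anti: "P (j, i) = - P (i, j)" for i j using assms unfolding AntiPoly_def by blast
  have "peval P b a = (\<Sum>p\<in>prod.swap ` supp2 P. P p * b ^ fst p * a ^ snd p)"
    using peval_superset[OF fin order_refl] supp2_swap[OF assms] by simp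
  also have "\<dots> = (\<Sum>p\<in>supp2 P. P (prod.swap p) * b ^ snd p * a ^ fst p)"
    by (subst sum.reindex) (auto simp: comp_def)
  also have "\<dots> = (\<Sum>p\<in>supp2 P. - (P p * a ^ fst p * b ^ snd p))"
  proof (rule sum.cong[OF refl])
    fix p :: "nat \<times> nat"
    have "P (prod.swap p) = - P p" using anti[of "snd p" "fst p"] by (simp add: prod.swap_def)
    then show "P (prod.swap p) * b ^ snd p * a ^ fst p = - (P p * a ^ fst p * b ^ snd p)" by simp
  qed
  also have "\<dots> = - (\<Sum>p\<in>supp2 P. P p * a ^ fst p * b ^ snd p)"
    by (rule sum_negf)
  also have "\<dots> = - peval P a b" using peval_superset[OF fin order_refl] by simp
  finally show ?thesis .
qed

lemma EV_lP_anti: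
  assumes "P \<in> AntiPoly"
  shows "EV (lP P) t = 2 * peval P (t 0 - t 1) (t 1 - t 2)"
proof -
  have "P \<in> Poly2" using assms unfolding AntiPoly_def by blast
  then show ?thesis using EV_lP[of P t] peval_anti[OF assms, of "t 1 - t 2" "t 0 - t 1"] by simp
qed


section \<open>identity theorem for bipolys\<close>

definition wij :: "nat \<times> nat \<Rightarrow> letter list" where
  "wij p = replicate (fst p) LY @ LX # replicate (snd p) LY"

lemma wij_inj: "wij p = wij q \<Longrightarrow> p = q"
proof -
  assume "wij p = wij q"
  then have "splitx (wij p) = splitx (wij q)" by simp
  then have "fst p = fst q" "replicate (snd p) LY = replicate (snd q) LY"
    unfolding wij_def splitx_rep by auto
  then show "p = q" by (metis length_replicate prod.expand)
qed

lemma mon_wij: "mon t (wij p) = t 0 ^ fst p * t 1 ^ snd p"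
  unfolding wij_def mon_split by (simp add: mon_rep sh_def)

lemma bipoly_ident:
  assumes "P \<in> Poly2" "\<And>a b. peval P a b = 0"
  shows "P = (\<lambda>_. 0)"
proof -
  have fin: "finite (supp2 P)" using assms by (simp add: Poly2_def)
  define r where "r = (\<lambda>w. \<Sum>p\<in>supp2 P. P p * dl (wij p) w)"
  have rA: "r \<in> Afin" unfolding r_def using fin by (auto intro!: Afin_sum Afin_pmul)
  have rh: "xhomog 1 r"
    unfolding xhomog_def r_def
  proof (intro allI impI)
    fix w assume "(\<Sum>p\<in>supp2 P. P p * dl (wij p) w) \<noteq> 0"
    then obtain p where "P p * dl (wij p) w \<noteq> 0" by (auto elim: sum.not_neutral_contains_not_neutral)
    then have "w = wij p" by (auto simp: dl_def split: if_splits)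
    then show "xc w = 1" by (simp add: wij_def)
  qed
  have "EV r t = peval P (t 0) (t 1)" for t
    unfolding r_def EV_expand[OF fin] mon_wij peval_superset[OF fin order_refl]
    by (simp add: mult_ac)
  then have "r = zeroA" using ident[OF rA rh] assms(2) by simp
  have "supp2 P = {}"
  proof (rule ccontr)
    assume "supp2 P \<noteq> {}"
    then obtain q where q: "q \<in> supp2 P" by blast
    have "r (wij q) = (\<Sum>p\<in>supp2 P. if p = q then P p else 0)"
      unfolding r_def by (rule sum.cong[OF refl]) (auto simp: dl_def dest: wij_inj)
    also have "\<dots> = P q" using q fin by simp
    finally have "r (wij q) = P q" .
    then show False using q \<open>r = zeroA\<close> by (simp add: zeroA_def supp2_def)
  qed
  then show ?thesis by (auto simp: supp2_def fun_eq_iff)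
qed

lemma lP_unique:
  assumes "P \<in> AntiPoly" "Q \<in> AntiPoly" "lP P = lP Q"
  shows "P = Q"
proof -
  have fP: "finite (supp2 P)" and fQ: "finite (supp2 Q)" using assms unfolding AntiPoly_def Poly2_def by blast+
  have pq: "peval P a b = peval Q a b" for a b
  proof -
    define t where "t = (\<lambda>m::nat. if m = 0 then a + b else if m = 1 then b else 0)"
    have "EV (lP P) t = EV (lP Q) t" using assms(3) by simp
    then show ?thesis using EV_lP_anti[OF assms(1), of t] EV_lP_anti[OF assms(2), of t] by (simp add: t_def)
  qed
  define R where "R = (\<lambda>p. P p - Q p)"
  have sR: "supp2 R \<subseteq> supp2 P \<union> supp2 Q" by (auto simp: R_def supp2_def)
  have RP: "R \<in> Poly2" unfolding Poly2_def using fP fQ sR by (meson finite_Un finite_subset mem_Collect_eq)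
  have "peval R a b = 0" for a b
  proof -
    have f: "finite (supp2 P \<union> supp2 Q)" using fP fQ by simp
    have "peval R a b = peval P a b - peval Q a b"
      unfolding peval_superset[OF f sR] peval_superset[OF f Un_upper1] peval_superset[OF f Un_upper2]
      by (simp add: R_def sum_subtractf algebra_simps)
    then show ?thesis using pq by simp
  qed
  then have "R = (\<lambda>_. 0)" using bipoly_ident[OF RP] by blast
  then show ?thesis by (auto simp: R_def fun_eq_iff)
qed


definition ev2 :: "real poly poly \<Rightarrow> real \<Rightarrow> real \<Rightarrow> real" where
  "ev2 q a b = poly (poly q [:b:]) a"

lemma ev2_mult: "ev2 (p * q) a b = ev2 p a b * ev2 q a b"
  by (simp add: ev2_def)

lemma ev2_add: "ev2 (p + q) a b = ev2 p a b + ev2 q a b"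
  by (simp add: ev2_def)

lemma ev2_one: "ev2 1 a b = 1"
  by (simp add: ev2_def)

lemma ev2_zero: "ev2 0 a b = 0"
  by (simp add: ev2_def)

lemma ev2_const: "ev2 [:[:c:]:] a b = c"
  by (simp add: ev2_def)

lemma ev2_X: "ev2 [:[:0, 1:]:] a b = a"
  by (simp add: ev2_def)

lemma ev2_Y: "ev2 [:0, 1:] a b = b"
  by (simp add: ev2_def)

lemma ev2_sum: "ev2 (\<Sum>x\<in>S. F x) a b = (\<Sum>x\<in>S. ev2 (F x) a b)"
  by (simp add: ev2_def poly_sum)

lemma ev2_mon: "ev2 (mon T w) a b = mon (\<lambda>m. ev2 (T m) a b) w"
proof (induction w arbitrary: T)
  case Nil
  then show ?case by (simp add: ev2_one)
next
  case (Cons c w)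
  then show ?case by (cases c) (simp_all add: ev2_mult)
qed

lemma poly_sum_N:
  fixes x :: "'a::{comm_semiring_0,semiring_1}"
  assumes "degree p \<le> N"
  shows "poly p x = (\<Sum>i\<le>N. coeff p i * x ^ i)"
proof -
  have "poly p x = (\<Sum>i\<le>degree p. coeff p i * x ^ i)" by (rule poly_altdef)
  also have "\<dots> = (\<Sum>i\<le>N. coeff p i * x ^ i)"
    by (rule sum.mono_neutral_left) (use assms in \<open>auto simp: coeff_eq_0\<close>)
  finally show ?thesis .
qed

lemma ev2_coeffs:
  fixes q :: "real poly poly"
  obtains N where "\<And>i j. coeff (coeff q j) i \<noteq> 0 \<Longrightarrow> i \<le> N \<and> j \<le> N"
    "\<And>a b. ev2 q a b = (\<Sum>j\<le>N. \<Sum>i\<le>N. coeff (coeff q j) i * a ^ i * b ^ j)"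
proof -
  define N where "N = degree q + (\<Sum>j\<le>degree q. degree (coeff q j))"
  have dq: "degree q \<le> N" by (simp add: N_def)
  have dc: "degree (coeff q j) \<le> N" for j
  proof (cases "j \<le> degree q")
    case True
    then have "degree (coeff q j) \<le> (\<Sum>j\<le>degree q. degree (coeff q j))"
      by (intro member_le_sum) auto
    then show ?thesis by (simp add: N_def)
  next
    case False
    then have "coeff q j = 0" by (simp add: coeff_eq_0)
    then show ?thesis by simp
  qed
  have bound: "i \<le> N \<and> j \<le> N" if "coeff (coeff q j) i \<noteq> 0" for i j
  proof -
    have "coeff q j \<noteq> 0" using that by auto
    then have "j \<le> degree q" by (rule le_degree)
    moreover have "i \<le> degree (coeff q j)" using that by (rule le_degree)
    ultimately show ?thesis using dq dc[of j] by linarith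
  qed
  have "ev2 q a b = (\<Sum>j\<le>N. \<Sum>i\<le>N. coeff (coeff q j) i * a ^ i * b ^ j)" for a b
  proof -
    have "poly q [:b:] = (\<Sum>j\<le>N. coeff q j * [:b:] ^ j)" by (rule poly_sum_N[OF dq])
    then have "ev2 q a b = (\<Sum>j\<le>N. poly (coeff q j) a * b ^ j)"
      by (simp add: ev2_def poly_sum)
    also have "\<dots> = (\<Sum>j\<le>N. \<Sum>i\<le>N. coeff (coeff q j) i * a ^ i * b ^ j)"
      by (rule sum.cong[OF refl]) (simp add: poly_sum_N[OF dc] sum_distrib_right)
    finally show ?thesis .
  qed
  then show ?thesis using that bound by blast
qed

lemma exists_P:
  assumes g: "Good2 u"
  shows "\<exists>P. P \<in> AntiPoly \<and> u = lP P"
proof -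
  have uA: "u \<in> Afin" and uh: "xhomog 2 u" and uti: "TI u" and uas: "ASk 2 u"
    using g by (auto simp: Good2_def)
  have fin: "finite (spt u)" using uA by (simp add: Afin_spt)
  define X :: "real poly poly" where "X = [:[:0, 1:]:]"
  define Y :: "real poly poly" where "Y = [:0, 1:]"
  define T where "T m = (if m = 0 then X + Y else if m = 1 then Y else 0)" for m :: nat
  define Q where "Q = (\<Sum>w\<in>spt u. [:[:u w:]:] * mon T w)"
  define tt where "tt a b = (\<lambda>m::nat. if m = 0 then a + b else if m = 1 then b else 0)" for a b :: real
  have evQ: "ev2 Q a b = EV u (tt a b)" for a b
  proof -
    have Tt: "(\<lambda>m. ev2 (T m) a b) = tt a b"
      by (rule ext) (simp add: T_def tt_def ev2_add[symmetric] ev2_X ev2_Y ev2_zero X_def Y_def, simp add: ev2_def)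
    show ?thesis unfolding Q_def ev2_sum ev2_mult ev2_const ev2_mon Tt EV_def ..
  qed
  obtain N where Nb: "\<And>i j. coeff (coeff Q j) i \<noteq> 0 \<Longrightarrow> i \<le> N \<and> j \<le> N"
    and Ne: "\<And>a b. ev2 Q a b = (\<Sum>j\<le>N. \<Sum>i\<le>N. coeff (coeff Q j) i * a ^ i * b ^ j)"
    using ev2_coeffs by blast
  define P0 where "P0 p = coeff (coeff Q (snd p)) (fst p)" for p :: "nat \<times> nat"
  define S where "S = {..N} \<times> {..N}"
  have fS: "finite S" by (simp add: S_def)
  have sS: "supp2 P0 \<subseteq> S" using Nb by (auto simp: S_def supp2_def P0_def)
  have swS: "prod.swap ` S = S" by (simp add: S_def product_swap)
  have P0e: "peval P0 a b = ev2 Q a b" for a b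
  proof -
    have "peval P0 a b = (\<Sum>p\<in>S. P0 p * a ^ fst p * b ^ snd p)" by (rule peval_superset[OF fS sS])
    also have "\<dots> = (\<Sum>i\<le>N. \<Sum>j\<le>N. coeff (coeff Q j) i * a ^ i * b ^ j)"
      unfolding S_def P0_def sum.cartesian_product by (simp add: split_def)
    also have "\<dots> = ev2 Q a b" unfolding Ne by (rule sum.swap)
    finally show ?thesis .
  qed
  define P where "P p = (P0 p - P0 (prod.swap p)) / 4" for p
  have sP: "supp2 P \<subseteq> S"
  proof
    fix p assume "p \<in> supp2 P"
    then have "P0 p \<noteq> 0 \<or> P0 (prod.swap p) \<noteq> 0" by (auto simp: supp2_def P_def)
    then show "p \<in> S"
    proof
      assume "P0 p \<noteq> 0" then show ?thesis using sS by (auto simp: supp2_def)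
    next
      assume "P0 (prod.swap p) \<noteq> 0"
      then have "prod.swap p \<in> S" using sS by (auto simp: supp2_def)
      then show ?thesis by (cases p) (auto simp: S_def)
    qed
  qed
  have PA: "P \<in> AntiPoly"
    unfolding AntiPoly_def Poly2_def using finite_subset[OF sP fS] by (simp add: P_def field_simps)
  have pevP: "peval P a b = (peval P0 a b - peval P0 b a) / 4" for a b
  proof -
    have sw: "(\<Sum>p\<in>S. P0 (prod.swap p) * a ^ fst p * b ^ snd p) = peval P0 b a"
    proof -
      have "(\<Sum>p\<in>S. P0 (prod.swap p) * a ^ fst p * b ^ snd p) = (\<Sum>p\<in>prod.swap ` S. P0 p * a ^ snd p * b ^ fst p)"
        by (subst sum.reindex) (auto simp: comp_def)
      also have "\<dots> = peval P0 b a" unfolding swS peval_superset[OF fS sS] by (simp add: mult_ac)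
      finally show ?thesis .
    qed
    have "peval P a b = (\<Sum>p\<in>S. P p * a ^ fst p * b ^ snd p)" by (rule peval_superset[OF fS sP])
    also have "\<dots> = ((\<Sum>p\<in>S. P0 p * a ^ fst p * b ^ snd p) - (\<Sum>p\<in>S. P0 (prod.swap p) * a ^ fst p * b ^ snd p)) / 4"
      by (simp add: P_def sum_divide_distrib[symmetric] sum_subtractf[symmetric] algebra_simps)
    also have "\<dots> = (peval P0 a b - peval P0 b a) / 4"
      unfolding sw peval_superset[OF fS sS] ..
    finally show ?thesis .
  qed
  have "EV u t = EV (lP P) t" for t
  proof -
    let ?U = "t 0 - t 1" and ?V = "t 1 - t 2"
    have e1: "peval P0 ?U ?V = EV u t"
    proof -
      have "peval P0 ?U ?V = EV u (tt ?U ?V)" by (simp add: P0e evQ)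
      also have "\<dots> = EV u (\<lambda>m. t m + (- t 2))"
      proof (rule EV_cong[OF uh])
        fix m :: nat assume "m \<le> 2"
        then have "m = 0 \<or> m = 1 \<or> m = 2" by auto
        then show "tt ?U ?V m = t m + - t 2" by (auto simp: tt_def)
      qed
      also have "\<dots> = EV u t" using uti[unfolded TI_def, rule_format, of t "- t 2"] by simp
      finally show ?thesis .
    qed
    have e2: "peval P0 ?V ?U = - EV u t"
    proof -
      have "peval P0 ?V ?U = EV u (tt ?V ?U)" by (simp add: P0e evQ)
      also have "\<dots> = EV u (\<lambda>m. - (\<lambda>m. t m + (- t 0)) (2 - m))"
      proof (rule EV_cong[OF uh])
        fix m :: nat assume "m \<le> 2"
        then have "m = 0 \<or> m = 1 \<or> m = 2" by auto
        then show "tt ?V ?U m = - (\<lambda>m. t m + (- t 0)) (2 - m)" by (auto simp: tt_def)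
      qed
      also have "\<dots> = - EV u (\<lambda>m. t m + (- t 0))" using uas[unfolded ASk_def, rule_format, of "\<lambda>m. t m + (- t 0)"] by simp
      also have "\<dots> = - EV u t" using uti[unfolded TI_def, rule_format, of t "- t 0"] by simp
      finally show ?thesis .
    qed
    have "EV (lP P) t = 2 * peval P ?U ?V" by (rule EV_lP_anti[OF PA])
    also have "\<dots> = EV u t" unfolding pevP e1 e2 by simp
    finally show ?thesis by simp
  qed
  then have "u = lP P"
    using ident_eq[OF uA lP_Afin uh lP_xhomog] PA by (auto simp: AntiPoly_def)
  then show ?thesis using PA by blast
qed


definition rho :: "(nat \<Rightarrow> 'a) \<Rightarrow> nat \<Rightarrow> 'a" where
  "rho t = (\<lambda>m. t ((m + 1) mod 3))"

lemma m3: "(x mod 3 + k) mod 3 = (x + k) mod (3::nat)"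
  by (rule mod_add_left_eq)

lemma tau_rho0: "tau 0 (rho t) = tau 2 t"
proof
  fix m :: nat
  have "((m + 2) mod 3 + 1) mod 3 = m mod 3" unfolding m3 by simp
  then show "tau 0 (rho t) m = tau 2 t m" unfolding tau_def rho_def by simp
qed

lemma tau_rho1: "tau 1 (rho t) = tau 0 t"
proof
  fix m :: nat
  have "((m + 1) mod 3 + 1) mod 3 = (m + 2) mod 3" unfolding m3 by simp
  then show "tau 1 (rho t) m = tau 0 t m" unfolding tau_def rho_def by simp
qed

lemma tau_rho2: "tau 2 (rho t) = tau 1 t"
proof
  fix m :: nat
  have "(m mod 3 + 1) mod 3 = (m + 1) mod 3" unfolding m3 by simp
  then show "tau 2 (rho t) m = tau 1 t m" unfolding tau_def rho_def by simp
qed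

lemma EV_Dx_rho:
  assumes "h \<in> Afin" "xhomog 3 h"
  shows "EV (Dx h) (rho t) = EV (Dx h) t"
  unfolding EV_Dx[OF assms] sum3 tau_rho0 tau_rho1 tau_rho2 by simp

lemma F3rep_Good2:
  assumes "f \<in> F3rep"
  shows "Good2 (Dx f)"
proof -
  from assms obtain g where f: "f \<in> Afin" "xhomog 3 f"
    and g: "g \<in> lspan {mulA a b |a b. a \<in> freeLie \<and> b \<in> freeLie}" "subA f g \<in> comm"
    unfolding F3rep_def FLrep_def by blast
  have "Dx (subA f g) = zeroA" by (rule Dx_comm[OF g(2)])
  then have e: "Dx f = Dx g" unfolding Dx_sub by (simp add: subA_def zeroA_def fun_eq_iff)
  have "xhomog 2 (Dx f)" using xhomog_Dx[of 2 f] f(2) by (simp add: numeral_3_eq_3 numeral_2_eq_2)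
  then have "Dx f = xcomp 2 (Dx g)" using comp_id e by metis
  then show ?thesis using Good2_lspan[OF g(1)] by simp
qed

lemma F3rep_ex1:
  assumes "f \<in> F3rep"
  shows "\<exists>!P. P \<in> AntiPoly \<and> Dx f = lP P"
proof -
  obtain P where "P \<in> AntiPoly" "Dx f = lP P" using exists_P[OF F3rep_Good2[OF assms]] by blast
  moreover have "Q = P" if "Q \<in> AntiPoly" "Dx f = lP Q" for Q
    using lP_unique[OF that(1) \<open>P \<in> AntiPoly\<close>] that(2) \<open>Dx f = lP P\<close> by simp
  ultimately show ?thesis by blast
qed

lemma Phi_prop:
  assumes "f \<in> F3rep"
  shows "Phi f \<in> AntiPoly \<and> Dx f = lP (Phi f)"
  unfolding Phi_def by (rule theI'[OF F3rep_ex1[OF assms]])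

lemma Phi_eq:
  assumes "f \<in> F3rep" "P \<in> AntiPoly" "Dx f = lP P"
  shows "Phi f = P"
  unfolding Phi_def by (rule the1_equality[OF F3rep_ex1[OF assms(1)]]) (use assms in simp)

lemma F3rep_Afin: "f \<in> F3rep \<Longrightarrow> f \<in> Afin"
  unfolding F3rep_def FLrep_def by blast

lemma F3rep_xhomog: "f \<in> F3rep \<Longrightarrow> xhomog 3 f"
  unfolding F3rep_def by blast

lemma part2:
  assumes "f \<in> F3rep" "g \<in> F3rep" "subA f g \<in> comm"
  shows "Phi f = Phi g"
proof -
  have "Dx (subA f g) = zeroA" by (rule Dx_comm[OF assms(3)])
  then have "Dx f = Dx g" unfolding Dx_sub by (simp add: subA_def zeroA_def fun_eq_iff)
  then show ?thesis by (simp add: Phi_def)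
qed

lemma lP_lin:
  assumes "P \<in> Poly2" "Q \<in> Poly2"
  shows "lP (\<lambda>p. a * P p + b * Q p) = addA (smulA a (lP P)) (smulA b (lP Q))"
proof -
  define S where "S = supp2 P \<union> supp2 Q"
  have fS: "finite S" using assms by (simp add: S_def Poly2_def)
  have s: "supp2 (\<lambda>p. a * P p + b * Q p) \<subseteq> S" "supp2 P \<subseteq> S" "supp2 Q \<subseteq> S"
    by (auto simp: S_def supp2_def)
  show ?thesis
    unfolding lP_superset[OF fS s(1)] lP_superset[OF fS s(2)] lP_superset[OF fS s(3)]
    by (rule ext) (simp add: addA_def smulA_def sum.distrib sum_distrib_left algebra_simps)
qed

lemma part3:
  assumes f: "f \<in> F3rep" and g: "g \<in> F3rep"
  shows "addA (smulA a f) (smulA b g) \<in> F3rep \<and> Phi (addA (smulA a f) (smulA b g)) = (\<lambda>p. a * Phi f p + b * Phi g p)"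
proof -
  let ?h = "addA (smulA a f) (smulA b g)"
  from f obtain gf where f1: "f \<in> Afin" "xhomog 3 f"
    and gf: "gf \<in> lspan {mulA a b |a b. a \<in> freeLie \<and> b \<in> freeLie}" "subA f gf \<in> comm"
    unfolding F3rep_def FLrep_def by blast
  from g obtain gg where g1: "g \<in> Afin" "xhomog 3 g"
    and gg: "gg \<in> lspan {mulA a b |a b. a \<in> freeLie \<and> b \<in> freeLie}" "subA g gg \<in> comm"
    unfolding F3rep_def FLrep_def by blast
  have hA: "?h \<in> Afin" using f1 g1 by auto
  have hh: "xhomog 3 ?h"
    using f1(2) g1(2) unfolding xhomog_def addA_def smulA_def by (metis add.right_neutral mult_zero_right)
  have "addA (smulA a gf) (smulA b gg) \<in> lspan {mulA a b |a b. a \<in> freeLie \<and> b \<in> freeLie}"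
    using gf gg by (intro lspan_add lspan_smul)
  moreover have "subA ?h (addA (smulA a gf) (smulA b gg)) \<in> comm"
  proof -
    have "addA (smulA a (subA f gf)) (smulA b (subA g gg)) \<in> comm"
      using gf gg unfolding comm_def by (intro lspan_add lspan_smul)
    moreover have "addA (smulA a (subA f gf)) (smulA b (subA g gg)) = subA ?h (addA (smulA a gf) (smulA b gg))"
      by (simp add: addA_def smulA_def subA_def fun_eq_iff algebra_simps)
    ultimately show ?thesis by simp
  qed
  ultimately have hF: "?h \<in> F3rep" unfolding F3rep_def FLrep_def using hA hh by blast
  have pf: "Phi f \<in> AntiPoly" "Dx f = lP (Phi f)" using Phi_prop[OF f] by auto
  have pg: "Phi g \<in> AntiPoly" "Dx g = lP (Phi g)" using Phi_prop[OF g] by auto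
  have fin: "finite (supp2 (Phi f))" "finite (supp2 (Phi g))"
    using pf(1) pg(1) unfolding AntiPoly_def Poly2_def by blast+
  have RA: "(\<lambda>p. a * Phi f p + b * Phi g p) \<in> AntiPoly"
  proof -
    have "supp2 (\<lambda>p. a * Phi f p + b * Phi g p) \<subseteq> supp2 (Phi f) \<union> supp2 (Phi g)"
      by (auto simp: supp2_def)
    then have "finite (supp2 (\<lambda>p. a * Phi f p + b * Phi g p))" using fin by (meson finite_UnI finite_subset)
    moreover have "\<forall>i j. a * Phi f (i, j) + b * Phi g (i, j) = - (a * Phi f (j, i) + b * Phi g (j, i))"
    proof (intro allI)
      fix i j
      have "Phi f (i, j) = - Phi f (j, i)" "Phi g (i, j) = - Phi g (j, i)"
        using pf(1) pg(1) unfolding AntiPoly_def by blast+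
      then show "a * Phi f (i, j) + b * Phi g (i, j) = - (a * Phi f (j, i) + b * Phi g (j, i))"
        by (simp add: algebra_simps)
    qed
    ultimately show ?thesis unfolding AntiPoly_def Poly2_def mem_Collect_eq by blast
  qed
  have "Dx ?h = lP (\<lambda>p. a * Phi f p + b * Phi g p)"
    unfolding Dx_add Dx_smul pf(2) pg(2) lP_lin[OF pf(1)[unfolded AntiPoly_def, THEN CollectD, THEN conjunct1]
        pg(1)[unfolded AntiPoly_def, THEN CollectD, THEN conjunct1]] ..
  then have "Phi ?h = (\<lambda>p. a * Phi f p + b * Phi g p)" by (rule Phi_eq[OF hF RA])
  then show ?thesis using hF by simp
qed


lemma cyc_to_PP:
  assumes PA: "P \<in> AntiPoly" and cyc: "\<And>X Y. peval P X Y = peval P Y (- X - Y)"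
  shows "P \<in> PP"
proof -
  have "2 * peval P a b = peval P (- a - b) a - peval P (- a - b) b" for a b
  proof -
    have e1: "peval P (- a - b) a = peval P a b"
      using cyc[of "- a - b" a] by simp
    have e2: "peval P (- a - b) b = - peval P a b"
      using cyc[of a b] peval_anti[OF PA, of "- a - b" b] by simp
    show ?thesis using e1 e2 by simp
  qed
  then show ?thesis using PA by (simp add: PP_def)
qed

lemma part4:
  assumes f: "f \<in> F3rep"
  shows "Phi f \<in> PP"
proof -
  let ?P = "Phi f"
  have pf: "?P \<in> AntiPoly" "Dx f = lP ?P" using Phi_prop[OF f] by auto
  have rot: "EV (lP ?P) (rho t) = EV (lP ?P) t" for t
    using EV_Dx_rho[OF F3rep_Afin[OF f] F3rep_xhomog[OF f], of t] pf(2) by simp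
  have "peval ?P X Y = peval ?P Y (- X - Y)" for X Y
  proof -
    define t where "t = (\<lambda>m::nat. if m = 0 then X + Y else if m = 1 then Y else 0)"
    have r: "rho t 0 = Y" "rho t 1 = 0" "rho t 2 = X + Y" by (simp_all add: rho_def t_def)
    have "2 * peval ?P (rho t 0 - rho t 1) (rho t 1 - rho t 2) = 2 * peval ?P (t 0 - t 1) (t 1 - t 2)"
      using rot[of t] EV_lP_anti[OF pf(1)] by simp
    then show ?thesis unfolding r by (simp add: t_def)
  qed
  then show ?thesis by (rule cyc_to_PP[OF pf(1)])
qed

lemma part5:
  assumes f: "f \<in> F3rep" and g: "g \<in> F3rep" and e: "Phi f = Phi g"
  shows "subA f g \<in> comm"
proof -
  have "Dx f = Dx g" using Phi_prop[OF f] Phi_prop[OF g] e by simp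
  let ?h = "subA f g"
  have hA: "?h \<in> Afin" using F3rep_Afin[OF f] F3rep_Afin[OF g] by auto
  have hh: "xhomog 3 ?h" using F3rep_xhomog[OF f] F3rep_xhomog[OF g] by (rule xhomog_sub)
  have dz: "Dx ?h = (\<lambda>w. 0)" unfolding Dx_sub using \<open>Dx f = Dx g\<close> by (simp add: subA_def)
  have mz: "mulA (genA LX) (\<lambda>w. 0) = (\<lambda>w. 0)" by (simp add: mulA_def)
  have "subA (smulA 3 ?h) (mulA (genA LX) (Dx ?h)) \<in> comm" by (rule Euler[OF hA hh])
  then have "smulA 3 ?h \<in> comm" unfolding dz mz by (simp add: subA_def smulA_def)
  then have "smulA (1/3) (smulA 3 ?h) \<in> comm" unfolding comm_def by (rule lspan_smul)
  moreover have "smulA (1/3) (smulA 3 ?h) = ?h" by (simp add: smulA_def)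
  ultimately show ?thesis by simp
qed

lemma PP_cyc:
  assumes "P \<in> PP"
  shows "peval P X Y = peval P Y (- X - Y)"
proof -
  have PA: "P \<in> AntiPoly" and eq: "\<And>a b. 2 * peval P a b = peval P (- a - b) a - peval P (- a - b) b"
    using assms unfolding PP_def by blast+
  let ?A = "peval P X Y" and ?B = "peval P Y (- X - Y)" and ?C = "peval P (- X - Y) X"
  have e1: "2 * ?A = ?C + ?B"
    using eq[of X Y] peval_anti[OF PA, of "- X - Y" Y] by simp
  have e2: "2 * ?B = ?A + ?C"
  proof -
    have "2 * ?B = peval P (- Y - (- X - Y)) Y - peval P (- Y - (- X - Y)) (- X - Y)" by (rule eq)
    also have "- Y - (- X - Y) = X" by simp
    finally show ?thesis using peval_anti[OF PA, of X "- X - Y"] by simp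
  qed
  show ?thesis using e1 e2 by simp
qed

lemma part6:
  assumes PPP: "P \<in> PP"
  shows "\<exists>f\<in>F3rep. Phi f = P"
proof -
  have PA: "P \<in> AntiPoly" using PPP unfolding PP_def by blast
  have P2: "P \<in> Poly2" using PA unfolding AntiPoly_def by blast
  have xA: "genA LX \<in> Afin" by (simp add: genA_dl Afin_dl)
  have lA: "lP P \<in> Afin" by (rule lP_Afin[OF P2])
  let ?m = "mulA (genA LX) (lP P)"
  define f where "f = smulA (1/3) ?m"
  have mA: "?m \<in> Afin" using xA lA by auto
  have n3: "(1::nat) + 2 = 3" by simp
  have mh: "xhomog 3 ?m" using xhomog_mulA[OF xhomog_gx lP_xhomog[of P], unfolded n3] .
  have fA: "f \<in> Afin" using mA by (auto simp: f_def)
  have fh: "xhomog 3 f" using mh by (simp add: f_def xhomog_def smulA_def)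
  have "f \<in> lspan {mulA a b |a b. a \<in> freeLie \<and> b \<in> freeLie}"
    unfolding f_def by (rule lspan_smul, rule lspan_base) (use fl_x lP_freeLie[OF P2] in blast)
  moreover have "subA f f \<in> comm"
  proof -
    have "subA f f = zeroA" by (simp add: subA_def zeroA_def)
    then show ?thesis unfolding comm_def using lspan_zero by simp
  qed
  ultimately have fF: "f \<in> F3rep" unfolding F3rep_def FLrep_def using fA fh by blast
  have E_rho: "EV (lP P) (rho t) = EV (lP P) t" for t
  proof -
    have "peval P (rho t 0 - rho t 1) (rho t 1 - rho t 2) = peval P (t 0 - t 1) (t 1 - t 2)"
      using PP_cyc[OF PPP, of "t 0 - t 1" "t 1 - t 2"] by (simp add: rho_def numeral_2_eq_2)
    then show ?thesis using EV_lP_anti[OF PA] by simp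
  qed
  have "EV (Dx f) t = EV (lP P) t" for t
  proof -
    have s0: "EV (lP P) (sh 1 (tau 0 t)) = EV (lP P) t"
    proof (rule EV_cong[OF lP_xhomog])
      fix m :: nat assume "m \<le> 2"
      then have "m = 0 \<or> m = 1 \<or> m = 2" by auto
      then show "sh 1 (tau 0 t) m = t m" by (auto simp: sh_def tau_def)
    qed
    have s1: "sh 1 (tau 1 t) = rho (rho t)"
    proof
      fix m :: nat
      have "((m + 1) mod 3 + 1) mod 3 = (m + 2) mod 3" unfolding m3 by simp
      then show "sh 1 (tau 1 t) m = rho (rho t) m" unfolding sh_def tau_def rho_def by simp
    qed
    have s2: "sh 1 (tau 2 t) = rho t"
      unfolding sh_def tau_def rho_def by (rule ext) simp
    have "EV (Dx f) t = 1/3 * EV (Dx ?m) t"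
      unfolding f_def Dx_smul EV_smul ..
    also have "\<dots> = 1/3 * (\<Sum>j<3. EV ?m (tau j t))"
      by (simp add: EV_Dx[OF mA mh])
    also have "\<dots> = 1/3 * (\<Sum>j<3. EV (lP P) (sh 1 (tau j t)))"
      by (simp add: EV_mul[OF xA lA xhomog_gx] EV_gx)
    also have "\<dots> = EV (lP P) t"
      unfolding sum3 s0 s1 s2 E_rho by simp
    finally show ?thesis .
  qed
  then have "Dx f = lP P"
    using ident_eq[OF Afin_Dx[OF fA] lA xhomog_Dx[of 2 f] lP_xhomog] fh by (simp add: numeral_3_eq_3 numeral_2_eq_2)
  then have "Phi f = P" by (rule Phi_eq[OF fF PA])
  then show ?thesis using fF by blast
qed

theorem mainTheorem8:
  shows "(\<forall>f\<in>F3rep. \<exists>!P. P \<in> AntiPoly \<and> Dx f = lP P)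
       \<and> (\<forall>f\<in>F3rep. \<forall>g\<in>F3rep. subA f g \<in> comm \<longrightarrow> Phi f = Phi g)
       \<and> (\<forall>f\<in>F3rep. \<forall>g\<in>F3rep. \<forall>a b.
            addA (smulA a f) (smulA b g) \<in> F3rep
          \<and> Phi (addA (smulA a f) (smulA b g)) = (\<lambda>p. a * Phi f p + b * Phi g p))
       \<and> (\<forall>f\<in>F3rep. Phi f \<in> PP)
       \<and> (\<forall>f\<in>F3rep. \<forall>g\<in>F3rep. Phi f = Phi g \<longrightarrow> subA f g \<in> comm)
       \<and> (\<forall>P\<in>PP. \<exists>f\<in>F3rep. Phi f = P)"
  using F3rep_ex1 part2 part3 part4 part5 part6 by blast


end
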